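(* Consider the two-unicast wireline network ("butterfly network with co-located sinks") with nodes $\mathsf{S}_1,\mathsf{S}_2,\mathsf{M}_1,\mathsf{M}_2,\mathsf{D}$, where the single destination node $\mathsf{D}$ must decode both $W_1$ (from $\mathsf{S}_1$) and $W_2$ (from $\mathsf{S}_2$), and directed edges: edge 1 from $\mathsf{S}_1$ to $\mathsf{M}_1$, edge 2 from $\mathsf{S}_2$ to $\mathsf{M}_1$, edge 3 from $\mathsf{M}_1$ to $\mathsf{M}_2$, edge 4 from $\mathsf{S}_1$ to $\mathsf{D}$, edge 5 from $\mathsf{S}_2$ to $\mathsf{D}$, and one edge from $\mathsf{M}_2$ to $\mathsf{D}$ of capacity $\mathsf{C}_6+\mathsf{C}_7$, where edge $i$ has capacity $\mathsf{C}_i\ge0$ and $\mathsf{C}_6,\mathsf{C}_7\ge0$. Then the secure capacity region (the closure of the set of securely achievable rate pairs) is the set of nonnegative $(R_1,R_2)$ with $$R_1\le\min\{\mathsf{C}_1,\mathsf{C}_4\},\quad R_2\le \min\{\mathsf{C}_2,\mathsf{C}_5\},\quad R_1+R_2\le \min\{\mathsf{C}_3,\mathsf{C}_6+\mathsf{C}_7\}.$$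
   Context: Network model: a directed acyclic graph; each edge $e$ is a noiseless orthogonal channel of capacity $\mathsf{C}_e$ carrying symbols over $\mathbb{F}_q$; over $n$ channel uses edge $e$ carries $X_e^n$, received as $Y_e^n=X_e^n$. Source $\mathsf{S}_i$ has message $W_i$ (uniform, $q$-ary entropy $nR_i$, $W_1,W_2$ independent) and an independent unlimited private source of randomness $\Theta_i$. A rate pair is securely achievable if for some block length $n$ there are encoding functions—an edge leaving $\mathsf{S}_i$ carries a function of $(W_i,\Theta_i)$, any other edge a function of the symbols received on the incoming edges of its tail—and decoders at $\mathsf{D}$ (functions of the symbols on its incoming edges) recovering $W_1$ and $W_2$ with vanishing error probability, and, for a passive eavesdropper wiretapping any single edge (which one is unknown), $I(W_1,W_2;Z_e^n)<\epsilon_n$ with $\epsilon_n\to0$ for every edge $e$, where $Z_e^n=X_e^n$ (strong secrecy). *)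

theory Defs
  imports "HOL-Probability.Probability"
begin

text \<open>Symbols of F_q are represented by the naturals below q; a block of L symbols
  is a list of length L.\<close>

definition words :: "nat \<Rightarrow> nat \<Rightarrow> nat list set" where
  "words q L = {xs. length xs = L \<and> (\<forall>x\<in>set xs. x < q)}"

text \<open>Number of q-ary symbols an edge of capacity C carries in n channel uses.\<close>
definition edge_len :: "nat \<Rightarrow> real \<Rightarrow> nat" where
  "edge_len n C = nat \<lfloor>real n * C\<rfloor>"

definition msg_size :: "nat \<Rightarrow> nat \<Rightarrow> real \<Rightarrow> nat" where
  "msg_size q n R = nat \<lceil>real q powr (real n * R)\<rceil>"

text \<open>A code: private randomness of the two sources (arbitrary discrete
  distributions), edge encoders, and the two decoders at D.\<close>
record code =
  rnd1 :: "nat pmf"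
  rnd2 :: "nat pmf"
  enc1 :: "nat \<Rightarrow> nat \<Rightarrow> nat list"
  enc4 :: "nat \<Rightarrow> nat \<Rightarrow> nat list"
  enc2 :: "nat \<Rightarrow> nat \<Rightarrow> nat list"
  enc5 :: "nat \<Rightarrow> nat \<Rightarrow> nat list"
  enc3 :: "nat list \<Rightarrow> nat list \<Rightarrow> nat list"
  enc6 :: "nat list \<Rightarrow> nat list"
  dec1 :: "nat list \<Rightarrow> nat list \<Rightarrow> nat list \<Rightarrow> nat"
  dec2 :: "nat list \<Rightarrow> nat list \<Rightarrow> nat list \<Rightarrow> nat"

definition code_valid ::
  "nat \<Rightarrow> nat \<Rightarrow> nat \<Rightarrow> nat \<Rightarrow> nat \<Rightarrow> nat \<Rightarrow> nat \<Rightarrow> nat \<Rightarrow> nat \<Rightarrow> code \<Rightarrow> bool" where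
  "code_valid q M1 M2 L1 L2 L3 L4 L5 L6 c \<longleftrightarrow>
     (\<forall>w<M1. \<forall>t. enc1 c w t \<in> words q L1 \<and> enc4 c w t \<in> words q L4) \<and>
     (\<forall>w<M2. \<forall>t. enc2 c w t \<in> words q L2 \<and> enc5 c w t \<in> words q L5) \<and>
     (\<forall>x1\<in>words q L1. \<forall>x2\<in>words q L2. enc3 c x1 x2 \<in> words q L3) \<and>
     (\<forall>x3\<in>words q L3. enc6 c x3 \<in> words q L6)"

definition joint_dist :: "nat \<Rightarrow> nat \<Rightarrow> code \<Rightarrow> (nat \<times> nat \<times> nat \<times> nat) pmf" where
  "joint_dist M1 M2 c =
     bind_pmf (pmf_of_set {..<M1}) (\<lambda>w1.
     bind_pmf (pmf_of_set {..<M2}) (\<lambda>w2.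
     bind_pmf (rnd1 c) (\<lambda>t1.
     bind_pmf (rnd2 c) (\<lambda>t2. return_pmf (w1, w2, t1, t2)))))"

definition edge_sig :: "code \<Rightarrow> nat \<Rightarrow> nat \<times> nat \<times> nat \<times> nat \<Rightarrow> nat list" where
  "edge_sig c e \<omega> = (case \<omega> of (w1, w2, t1, t2) \<Rightarrow>
     (let x1 = enc1 c w1 t1; x2 = enc2 c w2 t2; x4 = enc4 c w1 t1; x5 = enc5 c w2 t2;
          x3 = enc3 c x1 x2; x6 = enc6 c x3 in
      if e = 1 then x1 else if e = 2 then x2 else if e = 3 then x3
      else if e = 4 then x4 else if e = 5 then x5 else x6))"

definition error_prob :: "nat \<Rightarrow> nat \<Rightarrow> code \<Rightarrow> real" where
  "error_prob M1 M2 c = measure_pmf.prob (joint_dist M1 M2 c)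
     {\<omega>. case \<omega> of (w1, w2, t1, t2) \<Rightarrow>
        (dec1 c (edge_sig c 4 \<omega>) (edge_sig c 5 \<omega>) (edge_sig c 6 \<omega>),
         dec2 c (edge_sig c 4 \<omega>) (edge_sig c 5 \<omega>) (edge_sig c 6 \<omega>)) \<noteq> (w1, w2)}"

definition mutual_info :: "('a \<times> 'b) pmf \<Rightarrow> real" where
  "mutual_info J = (\<Sum>ab\<in>set_pmf J. pmf J ab *
      log 2 (pmf J ab / (pmf (map_pmf fst J) (fst ab) * pmf (map_pmf snd J) (snd ab))))"

definition leakage :: "nat \<Rightarrow> nat \<Rightarrow> code \<Rightarrow> nat \<Rightarrow> real" where
  "leakage M1 M2 c e = mutual_info
     (map_pmf (\<lambda>\<omega>. case \<omega> of (w1, w2, t1, t2) \<Rightarrow> ((w1, w2), edge_sig c e \<omega>))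
        (joint_dist M1 M2 c))"

text \<open>Secure achievability (strong secrecy against a single wiretapped edge),
  with capacities C1..C5 of edges 1..5 and C6 of the edge M2 -> D.\<close>
definition sec_achievable ::
  "nat \<Rightarrow> real \<Rightarrow> real \<Rightarrow> real \<Rightarrow> real \<Rightarrow> real \<Rightarrow> real \<Rightarrow> real \<Rightarrow> real \<Rightarrow> bool" where
  "sec_achievable q C1 C2 C3 C4 C5 C6 R1 R2 \<longleftrightarrow> 0 \<le> R1 \<and> 0 \<le> R2 \<and>
     (\<exists>cs :: nat \<Rightarrow> code.
        (\<forall>n. code_valid q (msg_size q n R1) (msg_size q n R2)
               (edge_len n C1) (edge_len n C2) (edge_len n C3)
               (edge_len n C4) (edge_len n C5) (edge_len n C6) (cs n)) \<and>
        (\<lambda>n. error_prob (msg_size q n R1) (msg_size q n R2) (cs n)) \<longlonglongrightarrow> 0 \<and>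
        (\<forall>e\<in>{1..6}. (\<lambda>n. leakage (msg_size q n R1) (msg_size q n R2) (cs n) e) \<longlonglongrightarrow> 0))"

end

theory Submission
  imports Defs
begin

definition ent :: "'a pmf \<Rightarrow> real" where
  "ent Q = (\<Sum>y\<in>set_pmf Q. - pmf Q y * ln (pmf Q y))"

lemma sum_pmf_map:
  assumes "finite (set_pmf Q)"
  shows "(\<Sum>y\<in>set_pmf Q. pmf Q y * \<phi> (k y)) =
         (\<Sum>z\<in>set_pmf (map_pmf k Q). pmf (map_pmf k Q) z * \<phi> z)"
proof -
  have f2: "finite (set_pmf (map_pmf k Q))" using assms by simp
  have "(\<Sum>y\<in>set_pmf Q. pmf Q y * \<phi> (k y)) = measure_pmf.expectation Q (\<lambda>y. \<phi> (k y))"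
    by (subst integral_measure_pmf_real[OF assms]) (auto simp: mult.commute)
  also have "\<dots> = measure_pmf.expectation (map_pmf k Q) \<phi>" by simp
  also have "\<dots> = (\<Sum>z\<in>set_pmf (map_pmf k Q). pmf (map_pmf k Q) z * \<phi> z)"
    by (subst integral_measure_pmf_real[OF f2]) (auto simp: mult.commute)
  finally show ?thesis .
qed

lemma pmf_le_pmf_map: "pmf Q y \<le> pmf (map_pmf k Q) (k y)"
proof -
  have "pmf Q y = measure Q {y}" by (simp add: measure_pmf_single)
  also have "\<dots> \<le> measure Q (k -` {k y})" by (rule measure_pmf.finite_measure_mono) auto
  finally show ?thesis by (simp add: pmf_map)
qed

lemma ent_map_le:
  assumes "finite (set_pmf Q)"
  shows "ent (map_pmf k Q) \<le> ent Q"
proof -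
  have "ent (map_pmf k Q) = (\<Sum>y\<in>set_pmf Q. pmf Q y * (- ln (pmf (map_pmf k Q) (k y))))"
    unfolding ent_def by (subst sum_pmf_map[OF assms]) simp
  also have "\<dots> \<le> (\<Sum>y\<in>set_pmf Q. pmf Q y * (- ln (pmf Q y)))"
  proof (rule sum_mono)
    fix y assume y: "y \<in> set_pmf Q"
    hence "0 < pmf Q y" by (simp add: pmf_positive)
    hence "ln (pmf Q y) \<le> ln (pmf (map_pmf k Q) (k y))" using pmf_le_pmf_map[of Q y k] by simp
    thus "pmf Q y * (- ln (pmf (map_pmf k Q) (k y))) \<le> pmf Q y * (- ln (pmf Q y))"
      using \<open>0 < pmf Q y\<close> by (intro mult_left_mono) auto
  qed
  finally show ?thesis unfolding ent_def by simp
qed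

lemma ent_map_inj:
  assumes "inj_on k (set_pmf Q)"
  shows "ent (map_pmf k Q) = ent Q"
  unfolding ent_def using assms
  by (simp add: sum.reindex pmf_map_inj)

lemma sum_pmf_set: "finite (set_pmf Q) \<Longrightarrow> (\<Sum>y\<in>set_pmf Q. pmf Q y) = 1"
  using measure_measure_pmf_finite[of "set_pmf Q" Q] measure_Int_set_pmf[of Q UNIV] by simp

lemma gibbs:
  assumes "finite (set_pmf Q)" "\<And>y. y \<in> set_pmf Q \<Longrightarrow> 0 < r y"
    "(\<Sum>y\<in>set_pmf Q. r y) \<le> 1"
  shows "(\<Sum>y\<in>set_pmf Q. pmf Q y * ln (r y / pmf Q y)) \<le> 0"
proof -
  have "(\<Sum>y\<in>set_pmf Q. pmf Q y * ln (r y / pmf Q y)) \<le> (\<Sum>y\<in>set_pmf Q. pmf Q y * (r y / pmf Q y - 1))"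
  proof (rule sum_mono)
    fix y assume y: "y \<in> set_pmf Q"
    hence p: "0 < pmf Q y" by (simp add: pmf_positive)
    have "ln (r y / pmf Q y) \<le> r y / pmf Q y - 1"
      by (rule ln_le_minus_one) (use p assms(2)[OF y] in simp)
    thus "pmf Q y * ln (r y / pmf Q y) \<le> pmf Q y * (r y / pmf Q y - 1)"
      using p by (intro mult_left_mono) auto
  qed
  also have "\<dots> = (\<Sum>y\<in>set_pmf Q. r y - pmf Q y)"
    by (rule sum.cong) (auto simp: right_diff_distrib set_pmf_iff)
  also have "\<dots> = (\<Sum>y\<in>set_pmf Q. r y) - (\<Sum>y\<in>set_pmf Q. pmf Q y)"
    by (simp add: sum_subtractf)
  also have "(\<Sum>y\<in>set_pmf Q. pmf Q y) = 1"
    using sum_pmf_set[OF assms(1)] .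
  finally show ?thesis using assms(3) by simp
qed

lemma ent_le_card:
  assumes "finite A" "set_pmf Q \<subseteq> A"
  shows "ent Q \<le> ln (card A)"
proof -
  have fin: "finite (set_pmf Q)" using assms finite_subset by blast
  have ne: "set_pmf Q \<noteq> {}" by (simp add: set_pmf_not_empty)
  hence "A \<noteq> {}" using assms by auto
  hence cA: "0 < card A" using assms by (simp add: card_gt_0_iff)
  have "(\<Sum>y\<in>set_pmf Q. (1 / card A::real)) \<le> (\<Sum>y\<in>A. 1 / card A)"
    by (rule sum_mono2[OF assms(1,2)]) auto
  also have "\<dots> = 1" using cA by simp
  finally have g: "(\<Sum>y\<in>set_pmf Q. pmf Q y * ln ((1 / card A) / pmf Q y)) \<le> 0"
    by (intro gibbs[OF fin]) (use cA in auto)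
  have "(\<Sum>y\<in>set_pmf Q. pmf Q y * ln ((1 / card A) / pmf Q y)) =
        (\<Sum>y\<in>set_pmf Q. - pmf Q y * ln (pmf Q y) - pmf Q y * ln (card A))"
  proof (rule sum.cong)
    fix y assume "y \<in> set_pmf Q"
    hence p: "0 < pmf Q y" by (simp add: pmf_positive)
    have e: "(1 / card A) / pmf Q y = inverse (card A * pmf Q y)" by (simp add: field_simps)
    have h: "ln ((1 / card A) / pmf Q y) = - ln (card A) - ln (pmf Q y)"
      unfolding e using p cA by (simp add: ln_inverse ln_mult)
    show "pmf Q y * ln ((1 / card A) / pmf Q y) = - pmf Q y * ln (pmf Q y) - pmf Q y * ln (card A)"
      by (subst h) (simp add: algebra_simps)
  qed simp
  also have "\<dots> = (\<Sum>y\<in>set_pmf Q. - pmf Q y * ln (pmf Q y)) - (\<Sum>y\<in>set_pmf Q. pmf Q y) * ln (card A)"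
    by (simp add: sum_subtractf sum_distrib_right)
  also have "(\<Sum>y\<in>set_pmf Q. pmf Q y) = 1"
    using sum_pmf_set[OF fin] .
  finally show ?thesis using g unfolding ent_def by simp
qed

lemma marg_sum:
  assumes "finite (set_pmf R)" "finite A" "fst ` set_pmf R \<subseteq> A"
  shows "(\<Sum>a\<in>A. pmf R (a, c)) = pmf (map_pmf snd R) c"
proof -
  have "(\<Sum>a\<in>A. pmf R (a, c)) = (\<Sum>x\<in>(\<lambda>a. (a, c)) ` A. pmf R x)"
    by (subst sum.reindex) (auto simp: inj_on_def)
  also have "\<dots> = measure R ((\<lambda>a. (a, c)) ` A)"
    using assms(2) by (simp add: measure_measure_pmf_finite)
  also have "\<dots> = measure R ((\<lambda>a. (a, c)) ` A \<inter> set_pmf R)" by (simp add: measure_Int_set_pmf)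
  also have "(\<lambda>a. (a, c)) ` A \<inter> set_pmf R = snd -` {c} \<inter> set_pmf R"
    using assms(3) by force
  also have "measure R \<dots> = measure R (snd -` {c})" by (simp add: measure_Int_set_pmf)
  finally show ?thesis by (simp add: pmf_map)
qed

lemma submod_pmf:
  fixes Q :: "('a \<times> 'b \<times> 'c) pmf"
  assumes fin: "finite (set_pmf Q)"
  shows "ent Q + ent (map_pmf (\<lambda>(a,b,c). c) Q) \<le>
         ent (map_pmf (\<lambda>(a,b,c). (a,c)) Q) + ent (map_pmf (\<lambda>(a,b,c). (b,c)) Q)"
proof -
  define fac where "fac = (\<lambda>(a::'a,b::'b,c::'c). (a,c))"
  define fbc where "fbc = (\<lambda>(a::'a,b::'b,c::'c). (b,c))"
  define fc where "fc = (\<lambda>(a::'a,b::'b,c::'c). c)"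
  define pac where "pac = pmf (map_pmf fac Q)"
  define pbc where "pbc = pmf (map_pmf fbc Q)"
  define pc where "pc = pmf (map_pmf fc Q)"
  define r where "r = (\<lambda>y. pac (fac y) * pbc (fbc y) / pc (fc y))"
  define S where "S = set_pmf Q"
  define A where "A = fst ` S"
  define B where "B = (fst \<circ> snd) ` S"
  define C where "C = (snd \<circ> snd) ` S"
  have finS: "finite S" using fin S_def by simp
  have finA: "finite A" "finite B" "finite C" using finS A_def B_def C_def by auto
  have SABC: "S \<subseteq> A \<times> B \<times> C" unfolding A_def B_def C_def by force
  have pos: "0 < pmf Q y" "0 < pac (fac y)" "0 < pbc (fbc y)" "0 < pc (fc y)" if "y \<in> S" for y
  proof -
    show q: "0 < pmf Q y" using that S_def by (simp add: pmf_positive)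
    show "0 < pac (fac y)" using q pmf_le_pmf_map[of Q y fac] pac_def by simp
    show "0 < pbc (fbc y)" using q pmf_le_pmf_map[of Q y fbc] pbc_def by simp
    show "0 < pc (fc y)" using q pmf_le_pmf_map[of Q y fc] pc_def by simp
  qed
  have mac: "(\<Sum>a\<in>A. pac (a, c)) = pc c" for c
  proof -
    have "(\<Sum>a\<in>A. pac (a, c)) = pmf (map_pmf snd (map_pmf fac Q)) c"
      unfolding pac_def
      by (rule marg_sum) (use fin finA in \<open>auto simp: A_def S_def fac_def intro: rev_image_eqI\<close>)
    also have "map_pmf snd (map_pmf fac Q) = map_pmf fc Q"
      by (auto simp: map_pmf_comp fac_def fc_def intro!: map_pmf_cong)
    finally show ?thesis by (simp add: pc_def)
  qed
  have mbc: "(\<Sum>b\<in>B. pbc (b, c)) = pc c" for c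
  proof -
    have "(\<Sum>b\<in>B. pbc (b, c)) = pmf (map_pmf snd (map_pmf fbc Q)) c"
      unfolding pbc_def
    proof (rule marg_sum)
      show "fst ` set_pmf (map_pmf fbc Q) \<subseteq> B"
        unfolding B_def S_def fbc_def by (auto simp: image_iff) (metis fst_conv snd_conv)
    qed (use fin finA in auto)
    also have "map_pmf snd (map_pmf fbc Q) = map_pmf fc Q"
      by (auto simp: map_pmf_comp fbc_def fc_def intro!: map_pmf_cong)
    finally show ?thesis by (simp add: pc_def)
  qed
  have Cset: "C = set_pmf (map_pmf fc Q)" unfolding C_def S_def fc_def by force
  have "(\<Sum>y\<in>S. r y) \<le> (\<Sum>y\<in>A \<times> B \<times> C. r y)"
    by (rule sum_mono2) (use finA SABC in \<open>auto simp: r_def pac_def pbc_def pc_def\<close>)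
  also have "\<dots> = (\<Sum>(a,b,c)\<in>A \<times> B \<times> C. pac (a,c) * pbc (b,c) / pc c)"
    by (rule sum.cong) (auto simp: r_def fac_def fbc_def fc_def)
  also have "\<dots> = (\<Sum>a\<in>A. \<Sum>b\<in>B. \<Sum>c\<in>C. pac (a,c) * pbc (b,c) / pc c)"
    by (simp add: sum.cartesian_product)
  also have "\<dots> = (\<Sum>c\<in>C. (\<Sum>a\<in>A. pac (a,c)) * (\<Sum>b\<in>B. pbc (b,c)) / pc c)"
  proof -
    have "(\<Sum>a\<in>A. \<Sum>b\<in>B. \<Sum>c\<in>C. pac (a,c) * pbc (b,c) / pc c) =
          (\<Sum>a\<in>A. \<Sum>c\<in>C. \<Sum>b\<in>B. pac (a,c) * pbc (b,c) / pc c)"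
      by (rule sum.cong[OF refl], rule sum.swap)
    also have "\<dots> = (\<Sum>c\<in>C. \<Sum>a\<in>A. \<Sum>b\<in>B. pac (a,c) * pbc (b,c) / pc c)"
      by (rule sum.swap)
    also have "\<dots> = (\<Sum>c\<in>C. (\<Sum>a\<in>A. pac (a,c)) * (\<Sum>b\<in>B. pbc (b,c)) / pc c)"
      by (rule sum.cong[OF refl]) (simp add: sum_product sum_divide_distrib)
    finally show ?thesis .
  qed
  also have "\<dots> = (\<Sum>c\<in>C. pc c)"
    by (rule sum.cong) (auto simp: mac mbc Cset pc_def set_pmf_iff)
  also have "\<dots> = 1" unfolding Cset pc_def by (rule sum_pmf_set) (use fin in simp)
  finally have r1: "(\<Sum>y\<in>S. r y) \<le> 1" .
  have g: "(\<Sum>y\<in>S. pmf Q y * ln (r y / pmf Q y)) \<le> 0"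
    unfolding S_def by (rule gibbs[OF fin]) (use pos r1 in \<open>auto simp: r_def S_def\<close>)
  have e1: "ent (map_pmf fac Q) = (\<Sum>y\<in>S. pmf Q y * - ln (pac (fac y)))"
    unfolding ent_def S_def pac_def by (subst sum_pmf_map[OF fin]) simp
  have e2: "ent (map_pmf fbc Q) = (\<Sum>y\<in>S. pmf Q y * - ln (pbc (fbc y)))"
    unfolding ent_def S_def pbc_def by (subst sum_pmf_map[OF fin]) simp
  have e3: "ent (map_pmf fc Q) = (\<Sum>y\<in>S. pmf Q y * - ln (pc (fc y)))"
    unfolding ent_def S_def pc_def by (subst sum_pmf_map[OF fin]) simp
  have "(\<Sum>y\<in>S. pmf Q y * ln (r y / pmf Q y)) =
        (\<Sum>y\<in>S. - (pmf Q y * - ln (pac (fac y))) - pmf Q y * - ln (pbc (fbc y)) + pmf Q y * - ln (pc (fc y))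
             + (- pmf Q y * ln (pmf Q y)))"
  proof (rule sum.cong)
    fix y assume y: "y \<in> S"
    have h: "ln (r y / pmf Q y) = ln (pac (fac y)) + ln (pbc (fbc y)) - ln (pc (fc y)) - ln (pmf Q y)"
      using pos[OF y] by (simp add: r_def ln_div ln_mult)
    show "pmf Q y * ln (r y / pmf Q y) = - (pmf Q y * - ln (pac (fac y))) - pmf Q y * - ln (pbc (fbc y)) + pmf Q y * - ln (pc (fc y))
             + (- pmf Q y * ln (pmf Q y))" by (subst h) (simp add: algebra_simps)
  qed simp
  also have "\<dots> = - ent (map_pmf fac Q) - ent (map_pmf fbc Q) + ent (map_pmf fc Q) + ent Q"
    unfolding e1 e2 e3 by (simp add: sum.distrib sum_subtractf sum_negf ent_def S_def)
  finally show ?thesis using g by (simp add: fac_def fbc_def fc_def)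
qed

definition H :: "'a pmf \<Rightarrow> ('a \<Rightarrow> 'b) \<Rightarrow> real" where
  "H P f = ent (map_pmf f P)"

lemma H_cong: "(\<And>x. x \<in> set_pmf P \<Longrightarrow> f x = g x) \<Longrightarrow> H P f = H P g"
  unfolding H_def by (metis map_pmf_cong)

lemma H_det:
  assumes "finite (g ` set_pmf P)" "\<And>x. x \<in> set_pmf P \<Longrightarrow> f x = \<phi> (g x)"
  shows "H P f \<le> H P g"
proof -
  have "map_pmf f P = map_pmf \<phi> (map_pmf g P)"
    unfolding map_pmf_comp by (rule map_pmf_cong) (use assms in auto)
  thus ?thesis unfolding H_def using ent_map_le[of "map_pmf g P" \<phi>] assms(1) by simp
qed

lemma H_submod:
  assumes "finite (f ` set_pmf P)" "finite (g ` set_pmf P)" "finite (h ` set_pmf P)"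
  shows "H P (\<lambda>x. (f x, g x, h x)) + H P h \<le> H P (\<lambda>x. (f x, h x)) + H P (\<lambda>x. (g x, h x))"
proof -
  let ?Q = "map_pmf (\<lambda>x. (f x, g x, h x)) P"
  have fin: "finite (set_pmf ?Q)"
  proof -
    have "set_pmf ?Q \<subseteq> f ` set_pmf P \<times> g ` set_pmf P \<times> h ` set_pmf P" by auto
    thus ?thesis using assms by (meson finite_SigmaI finite_subset)
  qed
  have "ent ?Q + ent (map_pmf (\<lambda>(a,b,c). c) ?Q) \<le>
         ent (map_pmf (\<lambda>(a,b,c). (a,c)) ?Q) + ent (map_pmf (\<lambda>(a,b,c). (b,c)) ?Q)"
    by (rule submod_pmf[OF fin])
  thus ?thesis unfolding H_def map_pmf_comp by simp
qed

lemma ent_return: "ent (return_pmf c) = 0"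
  unfolding ent_def by simp

lemma H_const: "H P (\<lambda>x. c) = 0"
  unfolding H_def by (simp add: ent_return)

lemma fin_pair: "finite (f ` S) \<Longrightarrow> finite (g ` S) \<Longrightarrow> finite ((\<lambda>x. (f x, g x)) ` S)"
  by (rule finite_subset[of _ "f ` S \<times> g ` S"]) auto

lemma finite_image_unit[simp]: "finite ((f::_\<Rightarrow>unit) ` S)"
  by (rule finite_subset[OF subset_UNIV]) simp

lemma H_subadd:
  assumes "finite (f ` set_pmf P)" "finite (g ` set_pmf P)"
  shows "H P (\<lambda>x. (f x, g x)) \<le> H P f + H P g"
proof -
  have "H P (\<lambda>x. (f x, g x, ())) + H P (\<lambda>x. ()) \<le> H P (\<lambda>x. (f x, ())) + H P (\<lambda>x. (g x, ()))"
    by (rule H_submod) (use assms in auto)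
  moreover have "H P (\<lambda>x. (f x, g x, ())) = H P (\<lambda>x. (f x, g x))"
  proof -
    have f3: "finite ((\<lambda>x. (f x, g x, ())) ` set_pmf P)"
      by (rule finite_subset[of _ "f ` set_pmf P \<times> g ` set_pmf P \<times> {()}"]) (use assms in auto)
    show ?thesis
    by (intro antisym H_det[where \<phi>="\<lambda>(a,b). (a,b,())"] H_det[where \<phi>="\<lambda>(a,b,c). (a,b)"])
       (use assms fin_pair f3 in auto)
  qed
  moreover have f1: "finite ((\<lambda>x. (f x, ())) ` set_pmf P)" "finite ((\<lambda>x. (g x, ())) ` set_pmf P)"
    by (rule fin_pair, use assms in auto)+
  moreover have "H P (\<lambda>x. (f x, ())) = H P f"
    by (intro antisym H_det[where \<phi>="\<lambda>a. (a,())"] H_det[where \<phi>="\<lambda>(a,b). a"])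
       (use assms f1 in auto)
  moreover have "H P (\<lambda>x. (g x, ())) = H P g"
    by (intro antisym H_det[where \<phi>="\<lambda>a. (a,())"] H_det[where \<phi>="\<lambda>(a,b). a"])
       (use assms f1 in auto)
  ultimately show ?thesis by (simp add: H_const)
qed

lemma sum_aux: "(\<Sum>b\<in>S. p b * X + c * Y b) = X * (\<Sum>b\<in>S. p b) + c * (\<Sum>b\<in>S. Y b)"
  for X c :: real by (simp add: sum.distrib sum_distrib_left sum_distrib_right mult.commute)

lemma ent_pair:
  assumes "finite (set_pmf A)" "finite (set_pmf B)"
  shows "ent (pair_pmf A B) = ent A + ent B"
proof -
  have "ent (pair_pmf A B) = (\<Sum>a\<in>set_pmf A. \<Sum>b\<in>set_pmf B.
           pmf B b * (- pmf A a * ln (pmf A a)) + pmf A a * (- pmf B b * ln (pmf B b)))"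
  proof -
    have "ent (pair_pmf A B) = (\<Sum>(a,b)\<in>set_pmf A \<times> set_pmf B. - (pmf A a * pmf B b) * ln (pmf A a * pmf B b))"
      unfolding ent_def set_pair_pmf by (rule sum.cong) (auto simp: pmf_pair)
    also have "\<dots> = (\<Sum>a\<in>set_pmf A. \<Sum>b\<in>set_pmf B. - (pmf A a * pmf B b) * ln (pmf A a * pmf B b))"
      by (simp add: sum.cartesian_product)
    also have "\<dots> = (\<Sum>a\<in>set_pmf A. \<Sum>b\<in>set_pmf B.
           pmf B b * (- pmf A a * ln (pmf A a)) + pmf A a * (- pmf B b * ln (pmf B b)))"
      by (intro sum.cong refl) (auto simp: ln_mult pmf_positive algebra_simps)
    finally show ?thesis .
  qed
  also have "\<dots> = (\<Sum>a\<in>set_pmf A. (- pmf A a * ln (pmf A a)) * (\<Sum>b\<in>set_pmf B. pmf B b)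
        + pmf A a * (\<Sum>b\<in>set_pmf B. - pmf B b * ln (pmf B b)))"
    by (rule sum.cong[OF refl]) (rule sum_aux)
  also have "\<dots> = (\<Sum>a\<in>set_pmf A. (- pmf A a * ln (pmf A a))) 
        + (\<Sum>a\<in>set_pmf A. pmf A a) * (\<Sum>b\<in>set_pmf B. - pmf B b * ln (pmf B b))"
    using sum_pmf_set[OF assms(2)] by (simp add: sum.distrib sum_distrib_right sum_subtractf sum_negf)
  also have "\<dots> = ent A + ent B"
    using sum_pmf_set[OF assms(1)] by (simp add: ent_def)
  finally show ?thesis .
qed

lemma H_indep:
  assumes "finite (f ` set_pmf P)" "finite (g ` set_pmf P)"
    "map_pmf (\<lambda>x. (f x, g x)) P = pair_pmf (map_pmf f P) (map_pmf g P)"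
  shows "H P (\<lambda>x. (f x, g x)) = H P f + H P g"
  unfolding H_def assms(3) by (rule ent_pair) (use assms in auto)

lemma ent_pmf_of_set:
  assumes "finite S" "S \<noteq> {}"
  shows "ent (pmf_of_set S) = ln (card S)"
proof -
  have c: "0 < card S" using assms by (simp add: card_gt_0_iff)
  have "ent (pmf_of_set S) = (\<Sum>y\<in>S. - (1 / card S) * ln (1 / card S))"
    unfolding ent_def using assms by (intro sum.cong) auto
  also have "\<dots> = ln (card S)" using c by (simp add: ln_div)
  finally show ?thesis .
qed

lemma MI_H:
  assumes "finite (f ` set_pmf P)" "finite (g ` set_pmf P)"
  shows "mutual_info (map_pmf (\<lambda>x. (f x, g x)) P) = (H P f + H P g - H P (\<lambda>x. (f x, g x))) / ln 2"
proof -
  define J where "J = map_pmf (\<lambda>x. (f x, g x)) P"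
  have finJ: "finite (set_pmf J)" unfolding J_def using fin_pair[OF assms] by simp
  have mf: "map_pmf fst J = map_pmf f P" and mg: "map_pmf snd J = map_pmf g P"
    unfolding J_def map_pmf_comp by simp_all
  have pos: "0 < pmf J ab" "0 < pmf (map_pmf fst J) (fst ab)" "0 < pmf (map_pmf snd J) (snd ab)"
    if "ab \<in> set_pmf J" for ab
  proof -
    show q: "0 < pmf J ab" using that by (simp add: pmf_positive)
    show "0 < pmf (map_pmf fst J) (fst ab)" using q pmf_le_pmf_map[of J ab fst] by simp
    show "0 < pmf (map_pmf snd J) (snd ab)" using q pmf_le_pmf_map[of J ab snd] by simp
  qed
  have "mutual_info J = (\<Sum>ab\<in>set_pmf J. (pmf J ab * ln (pmf J ab)
      - pmf J ab * ln (pmf (map_pmf fst J) (fst ab)) - pmf J ab * ln (pmf (map_pmf snd J) (snd ab))) / ln 2)"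
    unfolding mutual_info_def
  proof (rule sum.cong[OF refl])
    fix ab assume ab: "ab \<in> set_pmf J"
    have h: "ln (pmf J ab / (pmf (map_pmf fst J) (fst ab) * pmf (map_pmf snd J) (snd ab))) =
          ln (pmf J ab) - ln (pmf (map_pmf fst J) (fst ab)) - ln (pmf (map_pmf snd J) (snd ab))"
      using pos[OF ab] by (simp add: ln_div ln_mult)
    show "pmf J ab * log 2 (pmf J ab / (pmf (map_pmf fst J) (fst ab) * pmf (map_pmf snd J) (snd ab))) =
      (pmf J ab * ln (pmf J ab) - pmf J ab * ln (pmf (map_pmf fst J) (fst ab))
         - pmf J ab * ln (pmf (map_pmf snd J) (snd ab))) / ln 2"
      unfolding log_def h by (simp add: algebra_simps diff_divide_distrib)
  qed
  also have "\<dots> = ((\<Sum>ab\<in>set_pmf J. pmf J ab * ln (pmf J ab))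
      - (\<Sum>ab\<in>set_pmf J. pmf J ab * ln (pmf (map_pmf fst J) (fst ab)))
      - (\<Sum>ab\<in>set_pmf J. pmf J ab * ln (pmf (map_pmf snd J) (snd ab)))) / ln 2"
    by (simp add: sum_divide_distrib[symmetric] sum_subtractf)
  also have "(\<Sum>ab\<in>set_pmf J. pmf J ab * ln (pmf (map_pmf fst J) (fst ab))) = - ent (map_pmf fst J)"
    unfolding ent_def by (subst sum_pmf_map[OF finJ]) (simp add: sum_negf)
  also have "(\<Sum>ab\<in>set_pmf J. pmf J ab * ln (pmf (map_pmf snd J) (snd ab))) = - ent (map_pmf snd J)"
    unfolding ent_def by (subst sum_pmf_map[OF finJ]) (simp add: sum_negf)
  also have "(\<Sum>ab\<in>set_pmf J. pmf J ab * ln (pmf J ab)) = - ent J"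
    unfolding ent_def by (simp add: sum_negf)
  finally show ?thesis unfolding H_def J_def[symmetric] mf[symmetric] mg[symmetric] by simp
qed

lemma neg_xlnx_bound:
  fixes p N :: real assumes "0 < p" "0 < N"
  shows "- p * ln p \<le> p * ln N + 1 / N"
proof -
  have "ln (1 / (p * N)) \<le> 1 / (p * N) - 1" by (rule ln_le_minus_one) (use assms in simp)
  hence h: "- ln p - ln N \<le> 1 / (p * N) - 1" using assms by (simp add: ln_div ln_mult)
  have "p * (- ln p - ln N) \<le> p * (1 / (p * N) - 1)" by (rule mult_left_mono[OF h]) (use assms in simp)
  moreover have "p * (1 / (p * N) - 1) = 1 / N - p" using assms by (simp add: field_simps)
  ultimately show ?thesis using assms by (simp add: algebra_simps)
qed

lemma H_fano:
  fixes w :: "'x \<Rightarrow> 'w"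
  assumes S: "finite S" "\<And>x. x \<in> set_pmf P \<Longrightarrow> w x \<in> S"
  shows "H P (\<lambda>x. if d x \<noteq> w x then Some (w x) else None) \<le> measure P {x. d x \<noteq> w x} * ln (real (card S)) + 2"
proof -
  define v where "v = (\<lambda>x. if d x \<noteq> w x then Some (w x) else None)"
  define Q where "Q = map_pmf v P"
  define T where "T = insert None (Some ` S)"
  obtain x0 where "x0 \<in> set_pmf P" using set_pmf_not_empty by fast
  hence "S \<noteq> {}" using S by auto
  hence cS: "0 < card S" using S by (simp add: card_gt_0_iff)
  define N where "N = (\<lambda>y::'w option. if y = None then 1 else real (card S))"
  define c where "c = (\<lambda>y::'w option. if y = None then 0 else ln (real (card S)))"
  have QT: "set_pmf Q \<subseteq> T" unfolding Q_def T_def v_def using S by auto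
  have finT: "finite T" unfolding T_def using S by simp
  have finQ: "finite (set_pmf Q)" using QT finT finite_subset by blast
  have "ent Q \<le> (\<Sum>y\<in>set_pmf Q. pmf Q y * c y + 1 / N y)"
    unfolding ent_def
  proof (rule sum_mono)
    fix y assume "y \<in> set_pmf Q"
    hence p: "0 < pmf Q y" by (simp add: pmf_positive)
    show "- pmf Q y * ln (pmf Q y) \<le> pmf Q y * c y + 1 / N y"
      using neg_xlnx_bound[OF p, of "N y"] cS by (auto simp: N_def c_def)
  qed
  also have "\<dots> = (\<Sum>y\<in>set_pmf Q. pmf Q y * c y) + (\<Sum>y\<in>set_pmf Q. 1 / N y)"
    by (simp add: sum.distrib)
  also have "(\<Sum>y\<in>set_pmf Q. 1 / N y) \<le> (\<Sum>y\<in>T. 1 / N y)"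
    by (rule sum_mono2[OF finT QT]) (auto simp: N_def)
  also have "(\<Sum>y\<in>T. 1 / N y) = 1 + (\<Sum>y\<in>Some ` S. 1 / N y)"
    unfolding T_def using S by (subst sum.insert) (auto simp: N_def)
  also have "(\<Sum>y\<in>Some ` S. 1 / N y) = 1"
    using cS by (subst sum.reindex) (auto simp: N_def)
  also have "(\<Sum>y\<in>set_pmf Q. pmf Q y * c y) = ln (real (card S)) * (\<Sum>y\<in>set_pmf Q \<inter> {y. y \<noteq> None}. pmf Q y)"
  proof -
    have "(\<Sum>y\<in>set_pmf Q. pmf Q y * c y) = (\<Sum>y\<in>set_pmf Q. if y \<noteq> None then ln (real (card S)) * pmf Q y else 0)"
      by (rule sum.cong) (auto simp: c_def)
    also have "\<dots> = (\<Sum>y\<in>set_pmf Q \<inter> {y. y \<noteq> None}. ln (real (card S)) * pmf Q y)"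
      by (subst sum.inter_restrict[OF finQ]) simp
    finally show ?thesis by (simp add: sum_distrib_left)
  qed
  also have "(\<Sum>y\<in>set_pmf Q \<inter> {y. y \<noteq> None}. pmf Q y) = measure P {x. d x \<noteq> w x}"
  proof -
    have "(\<Sum>y\<in>set_pmf Q \<inter> {y. y \<noteq> None}. pmf Q y) = measure Q (set_pmf Q \<inter> {y. y \<noteq> None})"
      using finQ by (simp add: measure_measure_pmf_finite)
    also have "\<dots> = measure Q {y. y \<noteq> None}"
      by (metis inf_commute measure_Int_set_pmf)
    also have "\<dots> = measure P (v -` {y. y \<noteq> None})" unfolding Q_def by simp
    also have "v -` {y. y \<noteq> None} = {x. d x \<noteq> w x}" unfolding v_def by auto
    finally show ?thesis .
  qed
  finally show ?thesis unfolding H_def Q_def v_def by (simp add: mult.commute)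
qed

lemma key:
  assumes fin: "finite (w ` set_pmf P)" "finite (a ` set_pmf P)" "finite (b ` set_pmf P)"
      "finite (y ` set_pmf P)" "finite (v ` set_pmf P)"
    and det: "\<And>x. x \<in> set_pmf P \<Longrightarrow> w x = \<phi> (a x) (b x) (y x) (v x)"
    and ind1: "H P (\<lambda>x. ((w x, a x), y x)) = H P (\<lambda>x. (w x, a x)) + H P y"
    and ind2: "H P (\<lambda>x. (a x, y x)) = H P a + H P y"
  shows "H P w - H P b - H P v \<le> H P w + H P a - H P (\<lambda>x. (w x, a x))"
proof -
  have fay: "finite ((\<lambda>x. (a x, y x)) ` set_pmf P)" by (rule fin_pair) (use fin in auto)
  have fbv: "finite ((\<lambda>x. (b x, v x)) ` set_pmf P)" by (rule fin_pair) (use fin in auto)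
  have "H P (\<lambda>x. ((w x, a x), y x)) \<le> H P (\<lambda>x. ((a x, y x), (b x, v x)))"
    by (rule H_det[where \<phi>="\<lambda>((a,y),(b,v)). ((\<phi> a b y v, a), y)"])
       (use fin_pair[OF fay fbv] det in auto)
  also have "\<dots> \<le> H P (\<lambda>x. (a x, y x)) + H P (\<lambda>x. (b x, v x))"
    by (rule H_subadd[OF fay fbv])
  also have "H P (\<lambda>x. (b x, v x)) \<le> H P b + H P v"
    by (rule H_subadd) (use fin in auto)
  finally show ?thesis using ind1 ind2 by simp
qed

lemma joint_pair:
  "joint_dist M1 M2 c = map_pmf (\<lambda>((w1,t1),(w2,t2)). (w1,w2,t1,t2))
     (pair_pmf (pair_pmf (pmf_of_set {..<M1}) (rnd1 c)) (pair_pmf (pmf_of_set {..<M2}) (rnd2 c)))"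
  unfolding joint_dist_def pair_pmf_def map_pmf_def
  apply (simp add: bind_assoc_pmf bind_return_pmf)
  apply (rule bind_pmf_cong[OF refl])
  apply (rule bind_commute_pmf)
  done

definition A1 where "A1 M1 c = pair_pmf (pmf_of_set {..<M1}) (rnd1 c)"
definition A2 where "A2 M2 c = pair_pmf (pmf_of_set {..<M2}) (rnd2 c)"

lemma joint_indep:
  fixes F G
  defines "f \<equiv> (\<lambda>\<omega>::nat\<times>nat\<times>nat\<times>nat. F (fst \<omega>, fst (snd (snd \<omega>))))"
    and "g \<equiv> (\<lambda>\<omega>::nat\<times>nat\<times>nat\<times>nat. G (fst (snd \<omega>), snd (snd (snd \<omega>))))"
  shows "map_pmf (\<lambda>\<omega>. (f \<omega>, g \<omega>)) (joint_dist M1 M2 c) =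
         pair_pmf (map_pmf f (joint_dist M1 M2 c)) (map_pmf g (joint_dist M1 M2 c))"
proof -
  have "map_pmf (\<lambda>\<omega>. (f \<omega>, g \<omega>)) (joint_dist M1 M2 c) =
        map_pmf (\<lambda>(a, b). (F a, G b)) (pair_pmf (A1 M1 c) (A2 M2 c))"
    unfolding joint_pair map_pmf_comp A1_def A2_def f_def g_def
    by (rule map_pmf_cong) auto
  also have "\<dots> = pair_pmf (map_pmf F (A1 M1 c)) (map_pmf G (A2 M2 c))" by (rule map_pair)
  also have "map_pmf F (A1 M1 c) = map_pmf f (joint_dist M1 M2 c)"
  proof -
    have "map_pmf f (joint_dist M1 M2 c) = map_pmf F (map_pmf fst (pair_pmf (A1 M1 c) (A2 M2 c)))"
      unfolding joint_pair map_pmf_comp A1_def A2_def f_def by (rule map_pmf_cong) auto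
    thus ?thesis by (simp add: map_fst_pair_pmf)
  qed
  also have "map_pmf G (A2 M2 c) = map_pmf g (joint_dist M1 M2 c)"
  proof -
    have "map_pmf g (joint_dist M1 M2 c) = map_pmf G (map_pmf snd (pair_pmf (A1 M1 c) (A2 M2 c)))"
      unfolding joint_pair map_pmf_comp A1_def A2_def g_def by (rule map_pmf_cong) auto
    thus ?thesis by (simp add: map_snd_pair_pmf)
  qed
  finally show ?thesis .
qed

lemma joint_set:
  assumes "0 < M1" "0 < M2" "\<omega> \<in> set_pmf (joint_dist M1 M2 c)"
  shows "fst \<omega> < M1" "fst (snd \<omega>) < M2"
proof -
  have "set_pmf (pmf_of_set {..<M1}) = {..<M1}" "set_pmf (pmf_of_set {..<M2}) = {..<M2}"
    using assms by (auto intro!: set_pmf_of_set)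
  thus "fst \<omega> < M1" "fst (snd \<omega>) < M2" using assms(3) unfolding joint_pair by auto
qed

lemma map_W1: "0 < M1 \<Longrightarrow> map_pmf fst (joint_dist M1 M2 c) = pmf_of_set {..<M1}"
proof -
  let ?X = "pair_pmf (pair_pmf (pmf_of_set {..<M1}) (rnd1 c)) (pair_pmf (pmf_of_set {..<M2}) (rnd2 c))"
  have "map_pmf fst (joint_dist M1 M2 c) = map_pmf (\<lambda>x. fst (fst x)) ?X"
    unfolding joint_pair map_pmf_comp by (rule map_pmf_cong) auto
  also have "\<dots> = map_pmf fst (map_pmf fst ?X)" by (simp add: map_pmf_comp)
  finally show ?thesis by (simp add: map_fst_pair_pmf)
qed

lemma map_W2: "0 < M2 \<Longrightarrow> map_pmf (\<lambda>\<omega>. fst (snd \<omega>)) (joint_dist M1 M2 c) = pmf_of_set {..<M2}"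
proof -
  let ?X = "pair_pmf (pair_pmf (pmf_of_set {..<M1}) (rnd1 c)) (pair_pmf (pmf_of_set {..<M2}) (rnd2 c))"
  have "map_pmf (\<lambda>\<omega>. fst (snd \<omega>)) (joint_dist M1 M2 c) = map_pmf (\<lambda>x. fst (snd x)) ?X"
    unfolding joint_pair map_pmf_comp by (rule map_pmf_cong) auto
  also have "\<dots> = map_pmf fst (map_pmf snd ?X)" by (simp add: map_pmf_comp)
  finally show ?thesis by (simp add: map_snd_pair_pmf map_fst_pair_pmf)
qed

lemma words_eq: "words q L = {xs. set xs \<subseteq> {..<q} \<and> length xs = L}"
  unfolding words_def by auto

lemma finite_words[simp]: "finite (words q L)"
  unfolding words_eq by (rule finite_lists_length_eq) simp

lemma card_words: "card (words q L) = q ^ L"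
  unfolding words_eq by (simp add: card_lists_length_eq)

lemma edge_sig_simps:
  "edge_sig c 1 \<omega> = enc1 c (fst \<omega>) (fst (snd (snd \<omega>)))"
  "edge_sig c 2 \<omega> = enc2 c (fst (snd \<omega>)) (snd (snd (snd \<omega>)))"
  "edge_sig c 3 \<omega> = enc3 c (enc1 c (fst \<omega>) (fst (snd (snd \<omega>)))) (enc2 c (fst (snd \<omega>)) (snd (snd (snd \<omega>))))"
  "edge_sig c 4 \<omega> = enc4 c (fst \<omega>) (fst (snd (snd \<omega>)))"
  "edge_sig c 5 \<omega> = enc5 c (fst (snd \<omega>)) (snd (snd (snd \<omega>)))"
  "edge_sig c 6 \<omega> = enc6 c (enc3 c (enc1 c (fst \<omega>) (fst (snd (snd \<omega>)))) (enc2 c (fst (snd \<omega>)) (snd (snd (snd \<omega>)))))"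
  by (cases \<omega>; simp add: edge_sig_def Let_def)+

lemma sig_words:
  assumes "code_valid q M1 M2 L1 L2 L3 L4 L5 L6 c" "0 < M1" "0 < M2"
    "\<omega> \<in> set_pmf (joint_dist M1 M2 c)"
  shows "edge_sig c 1 \<omega> \<in> words q L1" "edge_sig c 2 \<omega> \<in> words q L2"
    "edge_sig c 3 \<omega> \<in> words q L3" "edge_sig c 4 \<omega> \<in> words q L4"
    "edge_sig c 5 \<omega> \<in> words q L5" "edge_sig c 6 \<omega> \<in> words q L6"
  using joint_set[OF assms(2-4)] assms(1) unfolding code_valid_def edge_sig_simps by blast+

lemma leakage_H:
  assumes "finite (edge_sig c e ` set_pmf (joint_dist M1 M2 c))" "0 < M1" "0 < M2"
  shows "leakage M1 M2 c e =
    (H (joint_dist M1 M2 c) (\<lambda>\<omega>. (fst \<omega>, fst (snd \<omega>))) + H (joint_dist M1 M2 c) (edge_sig c e)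
     - H (joint_dist M1 M2 c) (\<lambda>\<omega>. ((fst \<omega>, fst (snd \<omega>)), edge_sig c e \<omega>))) / ln 2"
proof -
  have fw: "finite ((\<lambda>\<omega>. (fst \<omega>, fst (snd \<omega>))) ` set_pmf (joint_dist M1 M2 c))"
    by (rule finite_subset[of _ "{..<M1} \<times> {..<M2}"]) (use joint_set[OF assms(2,3)] in auto)
  have "leakage M1 M2 c e = mutual_info (map_pmf (\<lambda>\<omega>. ((fst \<omega>, fst (snd \<omega>)), edge_sig c e \<omega>)) (joint_dist M1 M2 c))"
    unfolding leakage_def by (rule arg_cong[where f=mutual_info], rule map_pmf_cong) auto
  thus ?thesis using MI_H[OF fw assms(1)] by simp
qed

lemma H_swap:
  assumes "finite (f ` set_pmf P)" "finite (g ` set_pmf P)"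
  shows "H P (\<lambda>x. (g x, f x)) = H P (\<lambda>x. (f x, g x))"
  by (intro antisym H_det[where \<phi>="\<lambda>(a,b). (b,a)"]) (use fin_pair[OF assms] fin_pair[OF assms(2,1)] in auto)

lemma indep_H:
  assumes "finite ((\<lambda>\<omega>. F (fst \<omega>, fst (snd (snd \<omega>)))) ` set_pmf (joint_dist M1 M2 c))"
    "finite ((\<lambda>\<omega>. G (fst (snd \<omega>), snd (snd (snd \<omega>)))) ` set_pmf (joint_dist M1 M2 c))"
  shows "H (joint_dist M1 M2 c) (\<lambda>\<omega>. (F (fst \<omega>, fst (snd (snd \<omega>))), G (fst (snd \<omega>), snd (snd (snd \<omega>))))) =
         H (joint_dist M1 M2 c) (\<lambda>\<omega>. F (fst \<omega>, fst (snd (snd \<omega>)))) +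
         H (joint_dist M1 M2 c) (\<lambda>\<omega>. G (fst (snd \<omega>), snd (snd (snd \<omega>))))"
  by (rule H_indep[OF assms]) (rule joint_indep)

lemma fin_W1: assumes "0 < M1" "0 < M2" shows "finite ((\<lambda>\<omega>. fst \<omega>) ` set_pmf (joint_dist M1 M2 c))"
proof -
  have "(\<lambda>\<omega>. fst \<omega>) ` set_pmf (joint_dist M1 M2 c) \<subseteq> {..<M1}" using joint_set(1)[OF assms] by auto
  thus ?thesis by (rule finite_subset) simp
qed
lemma fin_W2: assumes "0 < M1" "0 < M2" shows "finite ((\<lambda>\<omega>. fst (snd \<omega>)) ` set_pmf (joint_dist M1 M2 c))"
proof -
  have "(\<lambda>\<omega>. fst (snd \<omega>)) ` set_pmf (joint_dist M1 M2 c) \<subseteq> {..<M2}" using joint_set(2)[OF assms] by auto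
  thus ?thesis by (rule finite_subset) simp
qed

lemma H_W1: "0 < M1 \<Longrightarrow> H (joint_dist M1 M2 c) (\<lambda>\<omega>. fst \<omega>) = ln M1"
  unfolding H_def using map_W1[of M1 M2 c] ent_pmf_of_set[of "{..<M1}"] by auto
lemma H_W2: "0 < M2 \<Longrightarrow> H (joint_dist M1 M2 c) (\<lambda>\<omega>. fst (snd \<omega>)) = ln M2"
  unfolding H_def using map_W2[of M2 M1 c] ent_pmf_of_set[of "{..<M2}"] by auto

lemma HW_split:
  assumes "0 < M1" "0 < M2"
  shows "H (joint_dist M1 M2 c) (\<lambda>\<omega>. (fst \<omega>, fst (snd \<omega>))) =
     H (joint_dist M1 M2 c) (\<lambda>\<omega>. fst \<omega>) + H (joint_dist M1 M2 c) (\<lambda>\<omega>. fst (snd \<omega>))"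
  using indep_H[of fst M1 M2 c fst] fin_W1[OF assms] fin_W2[OF assms] by simp

lemma HWa_S1:
  assumes "0 < M1" "0 < M2"
    and fa: "finite ((\<lambda>\<omega>. FA (fst \<omega>, fst (snd (snd \<omega>)))) ` set_pmf (joint_dist M1 M2 c))"
  shows "H (joint_dist M1 M2 c) (\<lambda>\<omega>. ((fst \<omega>, fst (snd \<omega>)), FA (fst \<omega>, fst (snd (snd \<omega>))))) =
     H (joint_dist M1 M2 c) (\<lambda>\<omega>. (fst \<omega>, FA (fst \<omega>, fst (snd (snd \<omega>))))) + H (joint_dist M1 M2 c) (\<lambda>\<omega>. fst (snd \<omega>))"
proof -
  let ?P = "joint_dist M1 M2 c"
  have f1: "finite ((\<lambda>\<omega>. (fst \<omega>, FA (fst \<omega>, fst (snd (snd \<omega>))))) ` set_pmf ?P)"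
    by (rule fin_pair[OF fin_W1[OF assms(1,2)] fa])
  have f2: "finite ((\<lambda>\<omega>. ((fst \<omega>, fst (snd \<omega>)), FA (fst \<omega>, fst (snd (snd \<omega>))))) ` set_pmf ?P)"
    by (rule fin_pair[OF fin_pair[OF fin_W1[OF assms(1,2)] fin_W2[OF assms(1,2)]] fa])
  have f3: "finite ((\<lambda>\<omega>. ((fst \<omega>, FA (fst \<omega>, fst (snd (snd \<omega>)))), fst (snd \<omega>))) ` set_pmf ?P)"
    by (rule fin_pair[OF f1 fin_W2[OF assms(1,2)]])
  have "H ?P (\<lambda>\<omega>. ((fst \<omega>, fst (snd \<omega>)), FA (fst \<omega>, fst (snd (snd \<omega>))))) =
        H ?P (\<lambda>\<omega>. ((fst \<omega>, FA (fst \<omega>, fst (snd (snd \<omega>)))), fst (snd \<omega>)))"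
    by (intro antisym H_det[where \<phi>="\<lambda>((a,b),c). ((a,c),b)"] H_det[where \<phi>="\<lambda>((a,c),b). ((a,b),c)"])
       (use f2 f3 in simp_all)
  also have "\<dots> = H ?P (\<lambda>\<omega>. (fst \<omega>, FA (fst \<omega>, fst (snd (snd \<omega>))))) + H ?P (\<lambda>\<omega>. fst (snd \<omega>))"
    using indep_H[of "\<lambda>u. (fst u, FA u)" M1 M2 c fst] f1 fin_W2[OF assms(1,2)] by simp
  finally show ?thesis .
qed

lemma HWa_S2:
  assumes "0 < M1" "0 < M2"
    and fa: "finite ((\<lambda>\<omega>. FA (fst (snd \<omega>), snd (snd (snd \<omega>)))) ` set_pmf (joint_dist M1 M2 c))"
  shows "H (joint_dist M1 M2 c) (\<lambda>\<omega>. ((fst \<omega>, fst (snd \<omega>)), FA (fst (snd \<omega>), snd (snd (snd \<omega>))))) =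
     H (joint_dist M1 M2 c) (\<lambda>\<omega>. (fst (snd \<omega>), FA (fst (snd \<omega>), snd (snd (snd \<omega>))))) + H (joint_dist M1 M2 c) (\<lambda>\<omega>. fst \<omega>)"
proof -
  let ?P = "joint_dist M1 M2 c"
  have f1: "finite ((\<lambda>\<omega>. (fst (snd \<omega>), FA (fst (snd \<omega>), snd (snd (snd \<omega>))))) ` set_pmf ?P)"
    by (rule fin_pair[OF fin_W2[OF assms(1,2)] fa])
  have f2: "finite ((\<lambda>\<omega>. ((fst \<omega>, fst (snd \<omega>)), FA (fst (snd \<omega>), snd (snd (snd \<omega>))))) ` set_pmf ?P)"
    by (rule fin_pair[OF fin_pair[OF fin_W1[OF assms(1,2)] fin_W2[OF assms(1,2)]] fa])
  have f3: "finite ((\<lambda>\<omega>. (fst \<omega>, (fst (snd \<omega>), FA (fst (snd \<omega>), snd (snd (snd \<omega>)))))) ` set_pmf ?P)"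
    by (rule fin_pair[OF fin_W1[OF assms(1,2)] f1])
  have "H ?P (\<lambda>\<omega>. ((fst \<omega>, fst (snd \<omega>)), FA (fst (snd \<omega>), snd (snd (snd \<omega>))))) =
        H ?P (\<lambda>\<omega>. (fst \<omega>, (fst (snd \<omega>), FA (fst (snd \<omega>), snd (snd (snd \<omega>))))))"
    by (intro antisym H_det[where \<phi>="\<lambda>((a,b),c). (a,(b,c))"] H_det[where \<phi>="\<lambda>(a,(b,c)). ((a,b),c)"])
       (use f2 f3 in simp_all)
  also have "\<dots> = H ?P (\<lambda>\<omega>. fst \<omega>) + H ?P (\<lambda>\<omega>. (fst (snd \<omega>), FA (fst (snd \<omega>), snd (snd (snd \<omega>)))))"
    using indep_H[of fst M1 M2 c "\<lambda>u. (fst u, FA u)"] f1 fin_W1[OF assms(1,2)] by simp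
  finally show ?thesis by simp
qed

lemma H_words:
  assumes "\<And>x. x \<in> set_pmf P \<Longrightarrow> f x \<in> words q L" "0 < q"
  shows "H P f \<le> L * ln q"
proof -
  have "H P f \<le> ln (card (words q L))"
    unfolding H_def by (rule ent_le_card) (use assms in auto)
  also have "\<dots> = L * ln q" using assms(2) by (simp add: card_words ln_realpow)
  finally show ?thesis .
qed

lemma err_mono:
  "measure (joint_dist M1 M2 c) {\<omega>. dec1 c (edge_sig c 4 \<omega>) (edge_sig c 5 \<omega>) (edge_sig c 6 \<omega>) \<noteq> fst \<omega>}
     \<le> error_prob M1 M2 c"
  "measure (joint_dist M1 M2 c) {\<omega>. dec2 c (edge_sig c 4 \<omega>) (edge_sig c 5 \<omega>) (edge_sig c 6 \<omega>) \<noteq> fst (snd \<omega>)}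
     \<le> error_prob M1 M2 c"
  unfolding error_prob_def by (rule measure_pmf.finite_measure_mono; auto)+

lemma err_eq:
  "measure (joint_dist M1 M2 c) {\<omega>. (dec1 c (edge_sig c 4 \<omega>) (edge_sig c 5 \<omega>) (edge_sig c 6 \<omega>),
        dec2 c (edge_sig c 4 \<omega>) (edge_sig c 5 \<omega>) (edge_sig c 6 \<omega>)) \<noteq> (fst \<omega>, fst (snd \<omega>))}
     = error_prob M1 M2 c"
  unfolding error_prob_def by (rule arg_cong[where f="measure _"]) auto

lemma bound_S1:
  fixes FA FB :: "nat \<times> nat \<Rightarrow> nat list" and FY :: "nat \<times> nat \<Rightarrow> 'y"
  assumes pos: "0 < M1" "0 < M2" "0 < q"
    and fa: "finite ((\<lambda>\<omega>. FA (fst \<omega>, fst (snd (snd \<omega>)))) ` set_pmf (joint_dist M1 M2 c))"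
    and fb: "\<And>\<omega>. \<omega> \<in> set_pmf (joint_dist M1 M2 c) \<Longrightarrow> FB (fst \<omega>, fst (snd (snd \<omega>))) \<in> words q LB"
    and fy: "finite ((\<lambda>\<omega>. FY (fst (snd \<omega>), snd (snd (snd \<omega>)))) ` set_pmf (joint_dist M1 M2 c))"
    and det: "\<And>\<omega>. \<omega> \<in> set_pmf (joint_dist M1 M2 c) \<Longrightarrow>
       dec1 c (edge_sig c 4 \<omega>) (edge_sig c 5 \<omega>) (edge_sig c 6 \<omega>) =
       \<psi> (FA (fst \<omega>, fst (snd (snd \<omega>)))) (FB (fst \<omega>, fst (snd (snd \<omega>)))) (FY (fst (snd \<omega>), snd (snd (snd \<omega>))))"
  shows "ln M1 - LB * ln q - error_prob M1 M2 c * ln M1 - 2 \<le>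
     H (joint_dist M1 M2 c) (\<lambda>\<omega>. (fst \<omega>, fst (snd \<omega>))) + H (joint_dist M1 M2 c) (\<lambda>\<omega>. FA (fst \<omega>, fst (snd (snd \<omega>))))
     - H (joint_dist M1 M2 c) (\<lambda>\<omega>. ((fst \<omega>, fst (snd \<omega>)), FA (fst \<omega>, fst (snd (snd \<omega>)))))"
proof -
  define P where "P = joint_dist M1 M2 c"
  define w where "w = (\<lambda>\<omega>::nat\<times>nat\<times>nat\<times>nat. fst \<omega>)"
  define a where "a = (\<lambda>\<omega>::nat\<times>nat\<times>nat\<times>nat. FA (fst \<omega>, fst (snd (snd \<omega>))))"
  define b where "b = (\<lambda>\<omega>::nat\<times>nat\<times>nat\<times>nat. FB (fst \<omega>, fst (snd (snd \<omega>))))"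
  define y where "y = (\<lambda>\<omega>::nat\<times>nat\<times>nat\<times>nat. FY (fst (snd \<omega>), snd (snd (snd \<omega>))))"
  define d where "d = (\<lambda>\<omega>. dec1 c (edge_sig c 4 \<omega>) (edge_sig c 5 \<omega>) (edge_sig c 6 \<omega>))"
  define v where "v = (\<lambda>\<omega>. if d \<omega> \<noteq> w \<omega> then Some (w \<omega>) else None)"
  have fw: "finite (w ` set_pmf P)" unfolding w_def P_def by (rule fin_W1[OF pos(1,2)])
  have fa': "finite (a ` set_pmf P)" using fa unfolding a_def P_def .
  have fb': "finite (b ` set_pmf P)"
    by (rule finite_subset[of _ "words q LB"]) (use fb in \<open>auto simp: b_def P_def\<close>)
  have fy': "finite (y ` set_pmf P)" using fy unfolding y_def P_def .
  have fv: "finite (v ` set_pmf P)"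
    by (rule finite_subset[of _ "insert None (Some ` {..<M1})"])
       (use joint_set[OF pos(1,2)] in \<open>auto simp: v_def w_def P_def\<close>)
  have k: "H P w - H P b - H P v \<le> H P w + H P a - H P (\<lambda>x. (w x, a x))"
  proof (rule key[OF fw fa' fb' fy' fv, where \<phi>="\<lambda>a b y v. case v of Some w \<Rightarrow> w | None \<Rightarrow> \<psi> a b y"])
    fix x assume "x \<in> set_pmf P"
    thus "w x = (case v x of Some w \<Rightarrow> w | None \<Rightarrow> \<psi> (a x) (b x) (y x))"
      using det[of x] by (auto simp: v_def d_def a_def b_def y_def P_def)
  next
    show "H P (\<lambda>x. ((w x, a x), y x)) = H P (\<lambda>x. (w x, a x)) + H P y"
      unfolding P_def w_def a_def y_def
      by (rule indep_H[of "\<lambda>u. (fst u, FA u)" M1 M2 c FY, simplified])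
         (use fin_pair[OF fw fa'] fy' in \<open>simp_all add: P_def w_def a_def y_def\<close>)
  next
    show "H P (\<lambda>x. (a x, y x)) = H P a + H P y"
      unfolding P_def a_def y_def
      by (rule indep_H) (use fa' fy' in \<open>simp_all add: P_def a_def y_def\<close>)
  qed
  have hw: "H P w = ln M1" unfolding P_def w_def by (rule H_W1[OF pos(1)])
  have hb: "H P b \<le> LB * ln q" by (rule H_words[OF _ pos(3)]) (use fb in \<open>simp add: b_def P_def\<close>)
  have hv: "H P v \<le> measure P {x. d x \<noteq> w x} * ln (real (card {..<M1})) + 2"
    unfolding v_def by (rule H_fano) (use joint_set[OF pos(1,2)] in \<open>auto simp: w_def P_def\<close>)
  have pe: "measure P {x. d x \<noteq> w x} \<le> error_prob M1 M2 c"
    using err_mono(1)[of M1 M2 c] unfolding P_def d_def w_def .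
  have l0: "0 \<le> ln (real M1)" using pos by simp
  have hv2: "H P v \<le> error_prob M1 M2 c * ln M1 + 2"
    using hv mult_right_mono[OF pe l0] by simp
  have split: "H P (\<lambda>\<omega>. (fst \<omega>, fst (snd \<omega>))) + H P a - H P (\<lambda>\<omega>. ((fst \<omega>, fst (snd \<omega>)), a \<omega>))
      = H P w + H P a - H P (\<lambda>x. (w x, a x))"
    using HW_split[OF pos(1,2), of c] HWa_S1[OF pos(1,2) fa] unfolding P_def w_def a_def by simp
  show ?thesis using k hw hb hv2 split unfolding P_def a_def by simp
qed

lemma bound_S2:
  fixes FA FB :: "nat \<times> nat \<Rightarrow> nat list" and FY :: "nat \<times> nat \<Rightarrow> 'y"
  assumes pos: "0 < M1" "0 < M2" "0 < q"
    and fa: "finite ((\<lambda>\<omega>. FA (fst (snd \<omega>), snd (snd (snd \<omega>)))) ` set_pmf (joint_dist M1 M2 c))"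
    and fb: "\<And>\<omega>. \<omega> \<in> set_pmf (joint_dist M1 M2 c) \<Longrightarrow> FB (fst (snd \<omega>), snd (snd (snd \<omega>))) \<in> words q LB"
    and fy: "finite ((\<lambda>\<omega>. FY (fst \<omega>, fst (snd (snd \<omega>)))) ` set_pmf (joint_dist M1 M2 c))"
    and det: "\<And>\<omega>. \<omega> \<in> set_pmf (joint_dist M1 M2 c) \<Longrightarrow>
       dec2 c (edge_sig c 4 \<omega>) (edge_sig c 5 \<omega>) (edge_sig c 6 \<omega>) =
       \<psi> (FA (fst (snd \<omega>), snd (snd (snd \<omega>)))) (FB (fst (snd \<omega>), snd (snd (snd \<omega>)))) (FY (fst \<omega>, fst (snd (snd \<omega>))))"
  shows "ln M2 - LB * ln q - error_prob M1 M2 c * ln M2 - 2 \<le>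
     H (joint_dist M1 M2 c) (\<lambda>\<omega>. (fst \<omega>, fst (snd \<omega>))) + H (joint_dist M1 M2 c) (\<lambda>\<omega>. FA (fst (snd \<omega>), snd (snd (snd \<omega>))))
     - H (joint_dist M1 M2 c) (\<lambda>\<omega>. ((fst \<omega>, fst (snd \<omega>)), FA (fst (snd \<omega>), snd (snd (snd \<omega>)))))"
proof -
  define P where "P = joint_dist M1 M2 c"
  define w where "w = (\<lambda>\<omega>::nat\<times>nat\<times>nat\<times>nat. fst (snd \<omega>))"
  define a where "a = (\<lambda>\<omega>::nat\<times>nat\<times>nat\<times>nat. FA (fst (snd \<omega>), snd (snd (snd \<omega>))))"
  define b where "b = (\<lambda>\<omega>::nat\<times>nat\<times>nat\<times>nat. FB (fst (snd \<omega>), snd (snd (snd \<omega>))))"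
  define y where "y = (\<lambda>\<omega>::nat\<times>nat\<times>nat\<times>nat. FY (fst \<omega>, fst (snd (snd \<omega>))))"
  define d where "d = (\<lambda>\<omega>. dec2 c (edge_sig c 4 \<omega>) (edge_sig c 5 \<omega>) (edge_sig c 6 \<omega>))"
  define v where "v = (\<lambda>\<omega>. if d \<omega> \<noteq> w \<omega> then Some (w \<omega>) else None)"
  have fw: "finite (w ` set_pmf P)" unfolding w_def P_def by (rule fin_W2[OF pos(1,2)])
  have fa': "finite (a ` set_pmf P)" using fa unfolding a_def P_def .
  have fb': "finite (b ` set_pmf P)"
    by (rule finite_subset[of _ "words q LB"]) (use fb in \<open>auto simp: b_def P_def\<close>)
  have fy': "finite (y ` set_pmf P)" using fy unfolding y_def P_def .
  have fv: "finite (v ` set_pmf P)"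
    by (rule finite_subset[of _ "insert None (Some ` {..<M2})"])
       (use joint_set[OF pos(1,2)] in \<open>auto simp: v_def w_def P_def\<close>)
  have fwa: "finite ((\<lambda>x. (w x, a x)) ` set_pmf P)" by (rule fin_pair[OF fw fa'])
  have k: "H P w - H P b - H P v \<le> H P w + H P a - H P (\<lambda>x. (w x, a x))"
  proof (rule key[OF fw fa' fb' fy' fv, where \<phi>="\<lambda>a b y v. case v of Some w \<Rightarrow> w | None \<Rightarrow> \<psi> a b y"])
    fix x assume "x \<in> set_pmf P"
    thus "w x = (case v x of Some w \<Rightarrow> w | None \<Rightarrow> \<psi> (a x) (b x) (y x))"
      using det[of x] by (auto simp: v_def d_def a_def b_def y_def P_def)
  next
    have "H P (\<lambda>x. ((w x, a x), y x)) = H P (\<lambda>x. (y x, (w x, a x)))"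
      by (rule H_swap[OF fy' fwa])
    also have "\<dots> = H P y + H P (\<lambda>x. (w x, a x))"
      unfolding P_def w_def a_def y_def
      by (rule indep_H[of FY M1 M2 c "\<lambda>u. (fst u, FA u)", simplified])
         (use fwa fy' in \<open>simp_all add: P_def w_def a_def y_def\<close>)
    finally show "H P (\<lambda>x. ((w x, a x), y x)) = H P (\<lambda>x. (w x, a x)) + H P y" by simp
  next
    have "H P (\<lambda>x. (a x, y x)) = H P (\<lambda>x. (y x, a x))"
      by (rule H_swap[OF fy' fa'])
    also have "\<dots> = H P y + H P a"
      unfolding P_def a_def y_def
      by (rule indep_H) (use fa' fy' in \<open>simp_all add: P_def a_def y_def\<close>)
    finally show "H P (\<lambda>x. (a x, y x)) = H P a + H P y" by simp
  qed
  have hw: "H P w = ln M2" unfolding P_def w_def by (rule H_W2[OF pos(2)])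
  have hb: "H P b \<le> LB * ln q" by (rule H_words[OF _ pos(3)]) (use fb in \<open>simp add: b_def P_def\<close>)
  have hv: "H P v \<le> measure P {x. d x \<noteq> w x} * ln (real (card {..<M2})) + 2"
    unfolding v_def by (rule H_fano) (use joint_set[OF pos(1,2)] in \<open>auto simp: w_def P_def\<close>)
  have pe: "measure P {x. d x \<noteq> w x} \<le> error_prob M1 M2 c"
    using err_mono(2)[of M1 M2 c] unfolding P_def d_def w_def .
  have l0: "0 \<le> ln (real M2)" using pos by simp
  have hv2: "H P v \<le> error_prob M1 M2 c * ln M2 + 2"
    using hv mult_right_mono[OF pe l0] by simp
  have split: "H P (\<lambda>\<omega>. (fst \<omega>, fst (snd \<omega>))) + H P a - H P (\<lambda>\<omega>. ((fst \<omega>, fst (snd \<omega>)), a \<omega>))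
      = H P w + H P a - H P (\<lambda>x. (w x, a x))"
    using HW_split[OF pos(1,2), of c] HWa_S2[OF pos(1,2) fa] unfolding P_def w_def a_def by simp
  show ?thesis using k hw hb hv2 split unfolding P_def a_def by simp
qed

lemma bound_sum:
  fixes F4 F5 :: "nat \<times> nat \<Rightarrow> nat list" and B :: "nat \<times> nat \<times> nat \<times> nat \<Rightarrow> nat list"
  assumes pos: "0 < M1" "0 < M2" "0 < q"
    and f4: "finite ((\<lambda>\<omega>. F4 (fst \<omega>, fst (snd (snd \<omega>)))) ` set_pmf (joint_dist M1 M2 c))"
    and f5: "finite ((\<lambda>\<omega>. F5 (fst (snd \<omega>), snd (snd (snd \<omega>)))) ` set_pmf (joint_dist M1 M2 c))"
    and fb: "\<And>\<omega>. \<omega> \<in> set_pmf (joint_dist M1 M2 c) \<Longrightarrow> B \<omega> \<in> words q LB"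
    and det: "\<And>\<omega>. \<omega> \<in> set_pmf (joint_dist M1 M2 c) \<Longrightarrow>
       (dec1 c (edge_sig c 4 \<omega>) (edge_sig c 5 \<omega>) (edge_sig c 6 \<omega>),
        dec2 c (edge_sig c 4 \<omega>) (edge_sig c 5 \<omega>) (edge_sig c 6 \<omega>)) =
       \<psi> (F4 (fst \<omega>, fst (snd (snd \<omega>))), F5 (fst (snd \<omega>), snd (snd (snd \<omega>)))) (B \<omega>)"
  shows "ln M1 + ln M2 - LB * ln q - error_prob M1 M2 c * (ln M1 + ln M2) - 2 \<le>
     (H (joint_dist M1 M2 c) (\<lambda>\<omega>. (fst \<omega>, fst (snd \<omega>))) + H (joint_dist M1 M2 c) (\<lambda>\<omega>. F4 (fst \<omega>, fst (snd (snd \<omega>))))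
     - H (joint_dist M1 M2 c) (\<lambda>\<omega>. ((fst \<omega>, fst (snd \<omega>)), F4 (fst \<omega>, fst (snd (snd \<omega>)))))) +
     (H (joint_dist M1 M2 c) (\<lambda>\<omega>. (fst \<omega>, fst (snd \<omega>))) + H (joint_dist M1 M2 c) (\<lambda>\<omega>. F5 (fst (snd \<omega>), snd (snd (snd \<omega>))))
     - H (joint_dist M1 M2 c) (\<lambda>\<omega>. ((fst \<omega>, fst (snd \<omega>)), F5 (fst (snd \<omega>), snd (snd (snd \<omega>))))))"
proof -
  define P where "P = joint_dist M1 M2 c"
  define w1 where "w1 = (\<lambda>\<omega>::nat\<times>nat\<times>nat\<times>nat. fst \<omega>)"
  define w2 where "w2 = (\<lambda>\<omega>::nat\<times>nat\<times>nat\<times>nat. fst (snd \<omega>))"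
  define w where "w = (\<lambda>\<omega>::nat\<times>nat\<times>nat\<times>nat. (fst \<omega>, fst (snd \<omega>)))"
  define x4 where "x4 = (\<lambda>\<omega>::nat\<times>nat\<times>nat\<times>nat. F4 (fst \<omega>, fst (snd (snd \<omega>))))"
  define x5 where "x5 = (\<lambda>\<omega>::nat\<times>nat\<times>nat\<times>nat. F5 (fst (snd \<omega>), snd (snd (snd \<omega>))))"
  define a where "a = (\<lambda>\<omega>. (x4 \<omega>, x5 \<omega>))"
  define y where "y = (\<lambda>\<omega>::nat\<times>nat\<times>nat\<times>nat. ())"
  define d where "d = (\<lambda>\<omega>. (dec1 c (edge_sig c 4 \<omega>) (edge_sig c 5 \<omega>) (edge_sig c 6 \<omega>),
        dec2 c (edge_sig c 4 \<omega>) (edge_sig c 5 \<omega>) (edge_sig c 6 \<omega>)))"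
  define v where "v = (\<lambda>\<omega>. if d \<omega> \<noteq> w \<omega> then Some (w \<omega>) else None)"
  have fw1: "finite (w1 ` set_pmf P)" unfolding w1_def P_def by (rule fin_W1[OF pos(1,2)])
  have fw2: "finite (w2 ` set_pmf P)" unfolding w2_def P_def by (rule fin_W2[OF pos(1,2)])
  have fw: "finite (w ` set_pmf P)" using fin_pair[OF fw1 fw2] unfolding w_def w1_def w2_def .
  have fx4: "finite (x4 ` set_pmf P)" using f4 unfolding x4_def P_def .
  have fx5: "finite (x5 ` set_pmf P)" using f5 unfolding x5_def P_def .
  have fa: "finite (a ` set_pmf P)" unfolding a_def by (rule fin_pair[OF fx4 fx5])
  have fb': "finite (B ` set_pmf P)"
    by (rule finite_subset[of _ "words q LB"]) (use fb in \<open>auto simp: P_def\<close>)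
  have fy: "finite (y ` set_pmf P)" by simp
  have fv: "finite (v ` set_pmf P)"
    by (rule finite_subset[of _ "insert None (Some ` ({..<M1} \<times> {..<M2}))"])
       (use joint_set[OF pos(1,2)] in \<open>auto simp: v_def w_def P_def\<close>)
  have fwa: "finite ((\<lambda>x. (w x, a x)) ` set_pmf P)" by (rule fin_pair[OF fw fa])
  have fwa3: "finite ((\<lambda>x. ((w x, a x), y x)) ` set_pmf P)" by (rule fin_pair[OF fwa fy])
  have fay: "finite ((\<lambda>x. (a x, y x)) ` set_pmf P)" by (rule fin_pair[OF fa fy])
  have k: "H P w - H P B - H P v \<le> H P w + H P a - H P (\<lambda>x. (w x, a x))"
  proof (rule key[OF fw fa fb' fy fv, where \<phi>="\<lambda>a b y v. case v of Some w \<Rightarrow> w | None \<Rightarrow> \<psi> a b"])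
    fix x assume "x \<in> set_pmf P"
    thus "w x = (case v x of Some w \<Rightarrow> w | None \<Rightarrow> \<psi> (a x) (B x))"
      using det[of x] by (auto simp: v_def d_def a_def x4_def x5_def P_def)
  next
    have "H P (\<lambda>x. ((w x, a x), y x)) = H P (\<lambda>x. (w x, a x))"
      by (intro antisym H_det[where \<phi>="\<lambda>(u,_). u"] H_det[where \<phi>="\<lambda>u. (u, ())"])
         (use fwa fwa3 in \<open>simp_all add: y_def\<close>)
    thus "H P (\<lambda>x. ((w x, a x), y x)) = H P (\<lambda>x. (w x, a x)) + H P y"
      by (simp add: y_def H_const)
  next
    have "H P (\<lambda>x. (a x, y x)) = H P a"
      by (intro antisym H_det[where \<phi>="\<lambda>(u,_). u"] H_det[where \<phi>="\<lambda>u. (u, ())"])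
         (use fa fay in \<open>simp_all add: y_def\<close>)
    thus "H P (\<lambda>x. (a x, y x)) = H P a + H P y"
      by (simp add: y_def H_const)
  qed
  have hw: "H P w = ln M1 + ln M2"
    using HW_split[OF pos(1,2), of c] H_W1[OF pos(1), of M2 c] H_W2[OF pos(2), of M1 c]
    unfolding P_def w_def by simp
  have hb: "H P B \<le> LB * ln q" by (rule H_words[OF _ pos(3)]) (use fb in \<open>simp add: P_def\<close>)
  have hv: "H P v \<le> measure P {x. d x \<noteq> w x} * ln (real (card ({..<M1} \<times> {..<M2}))) + 2"
    unfolding v_def by (rule H_fano) (use joint_set[OF pos(1,2)] in \<open>auto simp: w_def P_def\<close>)
  have pe: "measure P {x. d x \<noteq> w x} = error_prob M1 M2 c"
    using err_eq[of M1 M2 c] unfolding P_def d_def w_def .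
  have cardp: "ln (real (card ({..<M1} \<times> {..<M2}))) = ln M1 + ln M2"
    using pos by (simp add: card_cartesian_product ln_mult)
  have hv2: "H P v \<le> error_prob M1 M2 c * (ln M1 + ln M2) + 2"
    using hv unfolding pe cardp .
  have ha: "H P a = H P x4 + H P x5"
    unfolding P_def a_def x4_def x5_def by (rule indep_H) (use f4 f5 in simp_all)
  have fw1x4: "finite ((\<lambda>\<omega>. (fst \<omega>, F4 (fst \<omega>, fst (snd (snd \<omega>))))) ` set_pmf P)"
    using fin_pair[OF fw1 fx4] unfolding w1_def x4_def .
  have fw2x5: "finite ((\<lambda>\<omega>. (fst (snd \<omega>), F5 (fst (snd \<omega>), snd (snd (snd \<omega>))))) ` set_pmf P)"
    using fin_pair[OF fw2 fx5] unfolding w2_def x5_def .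
  have f15: "finite ((\<lambda>\<omega>. ((fst \<omega>, F4 (fst \<omega>, fst (snd (snd \<omega>)))), (fst (snd \<omega>), F5 (fst (snd \<omega>), snd (snd (snd \<omega>)))))) ` set_pmf P)"
    by (rule fin_pair[OF fw1x4 fw2x5])
  have hwa: "H P (\<lambda>x. (w x, a x)) =
      H P (\<lambda>\<omega>. (fst \<omega>, F4 (fst \<omega>, fst (snd (snd \<omega>))))) + H P (\<lambda>\<omega>. (fst (snd \<omega>), F5 (fst (snd \<omega>), snd (snd (snd \<omega>)))))"
  proof -
    have "H P (\<lambda>x. (w x, a x)) = H P (\<lambda>\<omega>. ((fst \<omega>, F4 (fst \<omega>, fst (snd (snd \<omega>)))), (fst (snd \<omega>), F5 (fst (snd \<omega>), snd (snd (snd \<omega>))))))"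
      by (intro antisym H_det[where \<phi>="\<lambda>((a,b),(c,d)). ((a,c),(b,d))"] H_det[where \<phi>="\<lambda>((a,c),(b,d)). ((a,b),(c,d))"])
         (use fwa f15 in \<open>simp_all add: w_def a_def x4_def x5_def\<close>)
    also have "\<dots> = H P (\<lambda>\<omega>. (fst \<omega>, F4 (fst \<omega>, fst (snd (snd \<omega>))))) + H P (\<lambda>\<omega>. (fst (snd \<omega>), F5 (fst (snd \<omega>), snd (snd (snd \<omega>)))))"
      unfolding P_def
      by (rule indep_H[of "\<lambda>u. (fst u, F4 u)" M1 M2 c "\<lambda>u. (fst u, F5 u)", simplified])
         (use fw1x4 fw2x5 in \<open>simp_all add: P_def\<close>)
    finally show ?thesis .
  qed
  note s1 = HWa_S1[OF pos(1,2) f4]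
  note s2 = HWa_S2[OF pos(1,2) f5]
  show ?thesis
    using k hw hb hv2 ha hwa HW_split[OF pos(1,2), of c] s1 s2
    unfolding P_def w_def a_def x4_def x5_def by simp
qed

lemma conv_n:
  assumes valid: "code_valid q M1 M2 L1 L2 L3 L4 L5 L6 c" and pos: "0 < M1" "0 < M2" "0 < q"
  shows "ln M1 - L4 * ln q - error_prob M1 M2 c * ln M1 - 2 \<le> ln 2 * leakage M1 M2 c 1"
    "ln M1 - L1 * ln q - error_prob M1 M2 c * ln M1 - 2 \<le> ln 2 * leakage M1 M2 c 4"
    "ln M2 - L5 * ln q - error_prob M1 M2 c * ln M2 - 2 \<le> ln 2 * leakage M1 M2 c 2"
    "ln M2 - L2 * ln q - error_prob M1 M2 c * ln M2 - 2 \<le> ln 2 * leakage M1 M2 c 5"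
    "ln M1 + ln M2 - L6 * ln q - error_prob M1 M2 c * (ln M1 + ln M2) - 2 \<le> ln 2 * (leakage M1 M2 c 4 + leakage M1 M2 c 5)"
    "ln M1 + ln M2 - L3 * ln q - error_prob M1 M2 c * (ln M1 + ln M2) - 2 \<le> ln 2 * (leakage M1 M2 c 4 + leakage M1 M2 c 5)"
proof -
  let ?P = "joint_dist M1 M2 c"
  note sw = sig_words[OF valid pos(1,2)]
  have fe: "finite (edge_sig c e ` set_pmf ?P)" if "e \<in> {1,2,3,4,5,6}" for e
  proof -
    have "edge_sig c e ` set_pmf ?P \<subseteq> words q L1 \<union> words q L2 \<union> words q L3 \<union> words q L4 \<union> words q L5 \<union> words q L6"
      using that sw by auto
    thus ?thesis by (rule finite_subset) simp
  qed
  have l2: "0 < ln (2::real)" by simp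
  have ES: "edge_sig c 1 = (\<lambda>\<omega>. enc1 c (fst \<omega>) (fst (snd (snd \<omega>))))"
    "edge_sig c 2 = (\<lambda>\<omega>. enc2 c (fst (snd \<omega>)) (snd (snd (snd \<omega>))))"
    "edge_sig c 4 = (\<lambda>\<omega>. enc4 c (fst \<omega>) (fst (snd (snd \<omega>))))"
    "edge_sig c 5 = (\<lambda>\<omega>. enc5 c (fst (snd \<omega>)) (snd (snd (snd \<omega>))))"
    by (rule ext, rule edge_sig_simps)+
  have lk: "ln 2 * leakage M1 M2 c e =
    H ?P (\<lambda>\<omega>. (fst \<omega>, fst (snd \<omega>))) + H ?P (edge_sig c e) - H ?P (\<lambda>\<omega>. ((fst \<omega>, fst (snd \<omega>)), edge_sig c e \<omega>))"
    if "e \<in> {1,2,3,4,5,6}" for e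
    using leakage_H[OF fe[OF that] pos(1,2)] l2 by simp
  have f1: "finite ((\<lambda>\<omega>. enc1 c (fst \<omega>) (fst (snd (snd \<omega>)))) ` set_pmf ?P)"
    using fe[of 1] unfolding ES by simp
  have f2: "finite ((\<lambda>\<omega>. enc2 c (fst (snd \<omega>)) (snd (snd (snd \<omega>)))) ` set_pmf ?P)"
    using fe[of 2] unfolding ES by simp
  have f4: "finite ((\<lambda>\<omega>. enc4 c (fst \<omega>) (fst (snd (snd \<omega>)))) ` set_pmf ?P)"
    using fe[of 4] unfolding ES by simp
  have f5: "finite ((\<lambda>\<omega>. enc5 c (fst (snd \<omega>)) (snd (snd (snd \<omega>)))) ` set_pmf ?P)"
    using fe[of 5] unfolding ES by simp
  have f25: "finite ((\<lambda>\<omega>. (enc2 c (fst (snd \<omega>)) (snd (snd (snd \<omega>))), enc5 c (fst (snd \<omega>)) (snd (snd (snd \<omega>))))) ` set_pmf ?P)"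
    by (rule fin_pair[OF f2 f5])
  have f14: "finite ((\<lambda>\<omega>. (enc1 c (fst \<omega>) (fst (snd (snd \<omega>))), enc4 c (fst \<omega>) (fst (snd (snd \<omega>))))) ` set_pmf ?P)"
    by (rule fin_pair[OF f1 f4])
  show "ln M1 - L4 * ln q - error_prob M1 M2 c * ln M1 - 2 \<le> ln 2 * leakage M1 M2 c 1"
    using bound_S1[OF pos, of "\<lambda>(w,t). enc1 c w t" c "\<lambda>(w,t). enc4 c w t" L4 "\<lambda>(w,t). (enc2 c w t, enc5 c w t)"
        "\<lambda>a b (x2,x5). dec1 c b x5 (enc6 c (enc3 c a x2))"] f1 f25 sw[unfolded ES] lk[of 1, unfolded ES]
    by (simp add: edge_sig_simps)
  show "ln M1 - L1 * ln q - error_prob M1 M2 c * ln M1 - 2 \<le> ln 2 * leakage M1 M2 c 4"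
    using bound_S1[OF pos, of "\<lambda>(w,t). enc4 c w t" c "\<lambda>(w,t). enc1 c w t" L1 "\<lambda>(w,t). (enc2 c w t, enc5 c w t)"
        "\<lambda>a b (x2,x5). dec1 c a x5 (enc6 c (enc3 c b x2))"] f4 f25 sw[unfolded ES] lk[of 4, unfolded ES]
    by (simp add: edge_sig_simps)
  show "ln M2 - L5 * ln q - error_prob M1 M2 c * ln M2 - 2 \<le> ln 2 * leakage M1 M2 c 2"
    using bound_S2[OF pos, of "\<lambda>(w,t). enc2 c w t" c "\<lambda>(w,t). enc5 c w t" L5 "\<lambda>(w,t). (enc1 c w t, enc4 c w t)"
        "\<lambda>a b (x1,x4). dec2 c x4 b (enc6 c (enc3 c x1 a))"] f2 f14 sw[unfolded ES] lk[of 2, unfolded ES]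
    by (simp add: edge_sig_simps)
  show "ln M2 - L2 * ln q - error_prob M1 M2 c * ln M2 - 2 \<le> ln 2 * leakage M1 M2 c 5"
    using bound_S2[OF pos, of "\<lambda>(w,t). enc5 c w t" c "\<lambda>(w,t). enc2 c w t" L2 "\<lambda>(w,t). (enc1 c w t, enc4 c w t)"
        "\<lambda>a b (x1,x4). dec2 c x4 a (enc6 c (enc3 c x1 b))"] f5 f14 sw[unfolded ES] lk[of 5, unfolded ES]
    by (simp add: edge_sig_simps)
  show "ln M1 + ln M2 - L6 * ln q - error_prob M1 M2 c * (ln M1 + ln M2) - 2 \<le> ln 2 * (leakage M1 M2 c 4 + leakage M1 M2 c 5)"
    using bound_sum[OF pos, of "\<lambda>(w,t). enc4 c w t" c "\<lambda>(w,t). enc5 c w t" "edge_sig c 6" L6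
        "\<lambda>(x4,x5) b. (dec1 c x4 x5 b, dec2 c x4 x5 b)"] f4 f5 sw[unfolded ES] lk[of 4, unfolded ES] lk[of 5, unfolded ES]
    by (simp add: edge_sig_simps algebra_simps)
  show "ln M1 + ln M2 - L3 * ln q - error_prob M1 M2 c * (ln M1 + ln M2) - 2 \<le> ln 2 * (leakage M1 M2 c 4 + leakage M1 M2 c 5)"
    using bound_sum[OF pos, of "\<lambda>(w,t). enc4 c w t" c "\<lambda>(w,t). enc5 c w t" "edge_sig c 3" L3
        "\<lambda>(x4,x5) b. (dec1 c x4 x5 (enc6 c b), dec2 c x4 x5 (enc6 c b))"] f4 f5 sw[unfolded ES] lk[of 4, unfolded ES] lk[of 5, unfolded ES]
    by (simp add: edge_sig_simps algebra_simps)
qed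

lemma lim_bound:
  fixes Pe lk :: "nat \<Rightarrow> real" and R C :: real
  assumes "Pe \<longlonglongrightarrow> 0" "lk \<longlonglongrightarrow> 0"
    and le: "\<And>n. n \<ge> 1 \<Longrightarrow> (1 - Pe n) * (real n * R) - 2 \<le> lk n + real n * C"
  shows "R \<le> C"
proof (rule LIMSEQ_le)
  show "(\<lambda>n. (1 - Pe n) * R - 2 / real n) \<longlonglongrightarrow> R"
    using assms(1) by (auto intro!: tendsto_eq_intros lim_const_over_n lim_inverse_n)
  have "(\<lambda>n. lk n * inverse (real n) + C) \<longlonglongrightarrow> 0 * 0 + C"
    by (intro tendsto_intros assms(2) lim_inverse_n)
  thus "(\<lambda>n. lk n * inverse (real n) + C) \<longlonglongrightarrow> C" by simp
  show "\<exists>N. \<forall>n\<ge>N. (1 - Pe n) * R - 2 / real n \<le> lk n * inverse (real n) + C"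
  proof (intro exI allI impI)
    fix n :: nat assume n: "1 \<le> n"
    hence np: "0 < real n" by simp
    have "((1 - Pe n) * R - 2 / real n) * real n = (1 - Pe n) * (real n * R) - 2"
      using np by (simp add: field_simps)
    also have "\<dots> \<le> lk n + real n * C" by (rule le[OF n])
    also have "\<dots> = (lk n * inverse (real n) + C) * real n" using np by (simp add: field_simps)
    finally show "(1 - Pe n) * R - 2 / real n \<le> lk n * inverse (real n) + C"
      using np by (simp only: mult_le_cancel_right)
  qed
qed

lemma msg_pos: "0 < q \<Longrightarrow> 0 < msg_size q n R"
  unfolding msg_size_def by simp

lemma msg_ln:
  assumes "1 < q"
  shows "real n * R * ln q \<le> ln (real (msg_size q n R))"
proof -
  have qp: "0 < real q powr (real n * R)" using assms by simp
  have "real q powr (real n * R) \<le> real (msg_size q n R)"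
    unfolding msg_size_def using qp by linarith
  moreover have m: "0 < real (msg_size q n R)" using msg_pos[of q n R] assms by simp
  ultimately have "ln (real q powr (real n * R)) \<le> ln (real (msg_size q n R))"
    using ln_le_cancel_iff[OF qp m] by blast
  moreover have "ln (real q powr (real n * R)) = real n * R * ln q" using assms by (simp add: ln_powr)
  ultimately show ?thesis by simp
qed

lemma edge_le: "0 \<le> C \<Longrightarrow> real (edge_len n C) \<le> real n * C"
  unfolding edge_len_def by simp

lemma err_bounds: "0 \<le> error_prob M1 M2 c" "error_prob M1 M2 c \<le> 1"
  unfolding error_prob_def by simp_all

lemma per_n_single:
  fixes R C lk Pe lM :: real and L :: nat
  assumes "lM - L * ln q - Pe * lM - 2 \<le> lk" "real n * R * ln q \<le> lM"
    "real L \<le> real n * C" "0 \<le> Pe" "Pe \<le> 1" "0 < ln q"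
  shows "(1 - Pe) * (real n * (R * ln q)) - 2 \<le> lk + real n * (C * ln q)"
proof -
  have "(1 - Pe) * (real n * R * ln q) \<le> (1 - Pe) * lM"
    by (rule mult_left_mono) (use assms in auto)
  moreover have "real L * ln q \<le> real n * C * ln q"
    by (rule mult_right_mono) (use assms in auto)
  ultimately show ?thesis using assms(1) by (simp add: algebra_simps)
qed

lemma converse:
  assumes q: "1 < q" and C: "0 \<le> C1" "0 \<le> C2" "0 \<le> C3" "0 \<le> C4" "0 \<le> C5" "0 \<le> C6"
    and ach: "sec_achievable q C1 C2 C3 C4 C5 C6 R1 R2"
  shows "R1 \<le> C1" "R1 \<le> C4" "R2 \<le> C2" "R2 \<le> C5" "R1 + R2 \<le> C3" "R1 + R2 \<le> C6"
proof -
  obtain cs where R: "0 \<le> R1" "0 \<le> R2"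
    and valid: "\<And>n. code_valid q (msg_size q n R1) (msg_size q n R2)
               (edge_len n C1) (edge_len n C2) (edge_len n C3)
               (edge_len n C4) (edge_len n C5) (edge_len n C6) (cs n)"
    and err: "(\<lambda>n. error_prob (msg_size q n R1) (msg_size q n R2) (cs n)) \<longlonglongrightarrow> 0"
    and lk: "\<And>e. e \<in> {1..6} \<Longrightarrow> (\<lambda>n. leakage (msg_size q n R1) (msg_size q n R2) (cs n) e) \<longlonglongrightarrow> 0"
    using ach unfolding sec_achievable_def by blast
  define Pe where "Pe = (\<lambda>n. error_prob (msg_size q n R1) (msg_size q n R2) (cs n))"
  define lkf where "lkf = (\<lambda>e n. ln 2 * leakage (msg_size q n R1) (msg_size q n R2) (cs n) e)"
  have lk0: "lkf e \<longlonglongrightarrow> 0" if "e \<in> {1..6}" for e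
    unfolding lkf_def using tendsto_mult[OF tendsto_const lk[OF that], of "ln 2"] by simp
  have lk45: "(\<lambda>n. lkf 4 n + lkf 5 n) \<longlonglongrightarrow> 0"
    using tendsto_add[OF lk0[of 4] lk0[of 5]] by simp
  have q0: "0 < q" using q by simp
  have lq: "0 < ln (real q)" using q by simp
  have pos1: "0 < msg_size q n R1" for n using msg_pos[OF q0] .
  have pos2: "0 < msg_size q n R2" for n using msg_pos[OF q0] .
  note cn = conv_n[OF valid pos1 pos2 q0]
  note eb = err_bounds
  note ml1 = msg_ln[OF q, of _ R1] and ml2 = msg_ln[OF q, of _ R2]
  have mls: "real n * (R1 + R2) * ln q \<le> ln (real (msg_size q n R1)) + ln (real (msg_size q n R2))" for n
    using ml1[of n] ml2[of n] by (simp add: algebra_simps)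
  have e3: "err \<longlonglongrightarrow> 0 \<Longrightarrow> (\<And>n. n \<ge> 1 \<Longrightarrow> (1 - err n) * (real n * (R * ln q)) - 2 \<le> l n + real n * (C * ln q))
        \<Longrightarrow> l \<longlonglongrightarrow> 0 \<Longrightarrow> R \<le> C" for err l and R C :: real
    using lim_bound[of err l "R * ln q" "C * ln q"] lq by simp
  show "R1 \<le> C4"
  proof (rule e3[of Pe _ "lkf 1"])
    show "Pe \<longlonglongrightarrow> 0" using err unfolding Pe_def .
    show "lkf 1 \<longlonglongrightarrow> 0" by (rule lk0) simp
    fix n :: nat assume "n \<ge> 1"
    show "(1 - Pe n) * (real n * (R1 * ln q)) - 2 \<le> lkf 1 n + real n * (C4 * ln q)"
      unfolding Pe_def lkf_def by (rule per_n_single[OF cn(1) ml1 edge_le[OF C(4)] eb lq])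
  qed
  show "R1 \<le> C1"
  proof (rule e3[of Pe _ "lkf 4"])
    show "Pe \<longlonglongrightarrow> 0" using err unfolding Pe_def .
    show "lkf 4 \<longlonglongrightarrow> 0" by (rule lk0) simp
    fix n :: nat assume "n \<ge> 1"
    show "(1 - Pe n) * (real n * (R1 * ln q)) - 2 \<le> lkf 4 n + real n * (C1 * ln q)"
      unfolding Pe_def lkf_def by (rule per_n_single[OF cn(2) ml1 edge_le[OF C(1)] eb lq])
  qed
  show "R2 \<le> C5"
  proof (rule e3[of Pe _ "lkf 2"])
    show "Pe \<longlonglongrightarrow> 0" using err unfolding Pe_def .
    show "lkf 2 \<longlonglongrightarrow> 0" by (rule lk0) simp
    fix n :: nat assume "n \<ge> 1"
    show "(1 - Pe n) * (real n * (R2 * ln q)) - 2 \<le> lkf 2 n + real n * (C5 * ln q)"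
      unfolding Pe_def lkf_def by (rule per_n_single[OF cn(3) ml2 edge_le[OF C(5)] eb lq])
  qed
  show "R2 \<le> C2"
  proof (rule e3[of Pe _ "lkf 5"])
    show "Pe \<longlonglongrightarrow> 0" using err unfolding Pe_def .
    show "lkf 5 \<longlonglongrightarrow> 0" by (rule lk0) simp
    fix n :: nat assume "n \<ge> 1"
    show "(1 - Pe n) * (real n * (R2 * ln q)) - 2 \<le> lkf 5 n + real n * (C2 * ln q)"
      unfolding Pe_def lkf_def by (rule per_n_single[OF cn(4) ml2 edge_le[OF C(2)] eb lq])
  qed
  show "R1 + R2 \<le> C6"
  proof (rule e3[of Pe _ "\<lambda>n. lkf 4 n + lkf 5 n"])
    show "Pe \<longlonglongrightarrow> 0" using err unfolding Pe_def .
    show "(\<lambda>n. lkf 4 n + lkf 5 n) \<longlonglongrightarrow> 0" by (rule lk45)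
    fix n :: nat assume "n \<ge> 1"
    show "(1 - Pe n) * (real n * ((R1 + R2) * ln q)) - 2 \<le> lkf 4 n + lkf 5 n + real n * (C6 * ln q)"
      using per_n_single[OF cn(5) mls edge_le[OF C(6)] eb lq]
      unfolding Pe_def lkf_def by (simp add: distrib_left)
  qed
  show "R1 + R2 \<le> C3"
  proof (rule e3[of Pe _ "\<lambda>n. lkf 4 n + lkf 5 n"])
    show "Pe \<longlonglongrightarrow> 0" using err unfolding Pe_def .
    show "(\<lambda>n. lkf 4 n + lkf 5 n) \<longlonglongrightarrow> 0" by (rule lk45)
    fix n :: nat assume "n \<ge> 1"
    show "(1 - Pe n) * (real n * ((R1 + R2) * ln q)) - 2 \<le> lkf 4 n + lkf 5 n + real n * (C3 * ln q)"
      using per_n_single[OF cn(6) mls edge_le[OF C(3)] eb lq]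
      unfolding Pe_def lkf_def by (simp add: distrib_left)
  qed
qed

fun digits :: "nat \<Rightarrow> nat \<Rightarrow> nat \<Rightarrow> nat list" where
  "digits q 0 x = []"
| "digits q (Suc L) x = x mod q # digits q L (x div q)"

fun undigits :: "nat \<Rightarrow> nat list \<Rightarrow> nat" where
  "undigits q [] = 0"
| "undigits q (d # ds) = d + q * undigits q ds"

lemma digits_words: "0 < q \<Longrightarrow> digits q L x \<in> words q L"
  by (induction L arbitrary: x) (auto simp: words_def)

lemma undigits_digits: "0 < q \<Longrightarrow> x < q ^ L \<Longrightarrow> undigits q (digits q L x) = x"
proof (induction L arbitrary: x)
  case 0 thus ?case by simp
next
  case (Suc L)
  have "x div q < q ^ L" using Suc.prems by (simp add: div_less_iff_less_mult mult.commute)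
  thus ?case using Suc by simp
qed

definition mk_code :: "nat \<Rightarrow> nat \<Rightarrow> nat \<Rightarrow> nat \<Rightarrow> nat \<Rightarrow> nat \<Rightarrow> nat \<Rightarrow> nat \<Rightarrow> nat \<Rightarrow> code" where
  "mk_code q M1 M2 L1 L2 L3 L4 L5 L6 = \<lparr> rnd1 = pmf_of_set {..<M1}, rnd2 = pmf_of_set {..<M2},
     enc1 = (\<lambda>w t. digits q L1 ((w + t) mod M1)), enc4 = (\<lambda>w t. digits q L4 t),
     enc2 = (\<lambda>w t. digits q L2 ((w + t) mod M2)), enc5 = (\<lambda>w t. digits q L5 t),
     enc3 = (\<lambda>x1 x2. digits q L3 (undigits q x1 mod M1 + M1 * (undigits q x2 mod M2))),
     enc6 = (\<lambda>x3. digits q L6 (undigits q x3)),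
     dec1 = (\<lambda>x4 x5 x6. (undigits q x6 mod M1 + M1 - undigits q x4) mod M1),
     dec2 = (\<lambda>x4 x5 x6. ((undigits q x6 div M1) mod M2 + M2 - undigits q x5) mod M2) \<rparr>"

lemma mk_valid: "0 < q \<Longrightarrow> code_valid q M1 M2 L1 L2 L3 L4 L5 L6 (mk_code q M1 M2 L1 L2 L3 L4 L5 L6)"
  unfolding code_valid_def mk_code_def by (simp add: digits_words)

lemma mod_unshift:
  fixes w t M :: nat
  assumes a: "w < M" "t < M" shows "((w + t) mod M + M - t) mod M = w"
proof (cases "w + t < M")
  case True
  hence "(w + t) mod M = w + t" by simp
  hence "(w + t) mod M + M - t = w + M" by simp
  thus ?thesis using a by simp
next
  case False
  hence "(w + t) mod M = w + t - M" using a by (simp add: mod_if)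
  hence "(w + t) mod M + M - t = w" using False a by simp
  thus ?thesis using a by simp
qed

lemma shift_pmf:
  fixes w M :: nat
  assumes w: "w < M" shows "map_pmf (\<lambda>t. (w + t) mod M) (pmf_of_set {..<M}) = pmf_of_set {..<M}"
proof -
  have inj: "inj_on (\<lambda>t. (w + t) mod M) {..<M}"
  proof (rule inj_onI)
    fix x y assume "x \<in> {..<M}" "y \<in> {..<M}" "(w + x) mod M = (w + y) mod M"
    hence "x < M" "y < M" "(x + w) mod M = (y + w) mod M" by (auto simp: add.commute)
    thus "x = y" using mod_unshift[of x M w] mod_unshift[of y M w] w by metis
  qed
  have img: "(\<lambda>t. (w + t) mod M) ` {..<M} = {..<M}"
    using inj by (intro endo_inj_surj) (auto simp: w)
  have "{..<M} \<noteq> {}" using w by auto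
  thus ?thesis using map_pmf_of_set_inj[OF inj] img by simp
qed

lemma MI_pair: "mutual_info (pair_pmf X Y) = 0"
  unfolding mutual_info_def map_fst_pair_pmf map_snd_pair_pmf
  by (rule sum.neutral) (auto simp: pmf_pair)

lemma jd_T:
  "map_pmf (\<lambda>\<omega>. ((fst \<omega>, fst (snd \<omega>)), G (fst (snd (snd \<omega>)), snd (snd (snd \<omega>))))) (joint_dist M1 M2 c)
   = pair_pmf (pair_pmf (pmf_of_set {..<M1}) (pmf_of_set {..<M2})) (map_pmf G (pair_pmf (rnd1 c) (rnd2 c)))"
  unfolding joint_dist_def pair_pmf_def map_pmf_def
  by (simp add: bind_assoc_pmf bind_return_pmf)

lemma shift2:
  fixes w1 w2 M1 M2 :: nat
  assumes "w1 < M1" "w2 < M2"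
  shows "bind_pmf (pmf_of_set {..<M1}) (\<lambda>t1. bind_pmf (pmf_of_set {..<M2}) (\<lambda>t2. return_pmf (K ((w1 + t1) mod M1, (w2 + t2) mod M2))))
       = bind_pmf (pmf_of_set {..<M1}) (\<lambda>t1. bind_pmf (pmf_of_set {..<M2}) (\<lambda>t2. return_pmf (K (t1, t2))))"
proof -
  have "bind_pmf (pmf_of_set {..<M1}) (\<lambda>t1. bind_pmf (pmf_of_set {..<M2}) (\<lambda>t2. return_pmf (K (t1, t2))))
     = bind_pmf (map_pmf (\<lambda>t. (w1 + t) mod M1) (pmf_of_set {..<M1}))
         (\<lambda>t1. bind_pmf (map_pmf (\<lambda>t. (w2 + t) mod M2) (pmf_of_set {..<M2})) (\<lambda>t2. return_pmf (K (t1, t2))))"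
    using assms by (simp add: shift_pmf)
  also have "\<dots> = bind_pmf (pmf_of_set {..<M1}) (\<lambda>t1. bind_pmf (pmf_of_set {..<M2}) (\<lambda>t2. return_pmf (K ((w1 + t1) mod M1, (w2 + t2) mod M2))))"
    by (simp add: bind_map_pmf)
  finally show ?thesis by simp
qed

lemma jd_rho:
  assumes "rnd1 c = pmf_of_set {..<M1}" "rnd2 c = pmf_of_set {..<M2}" "0 < M1" "0 < M2"
  shows "map_pmf (\<lambda>\<omega>. ((fst \<omega>, fst (snd \<omega>)), G ((fst \<omega> + fst (snd (snd \<omega>))) mod M1, (fst (snd \<omega>) + snd (snd (snd \<omega>))) mod M2))) (joint_dist M1 M2 c)
   = map_pmf (\<lambda>\<omega>. ((fst \<omega>, fst (snd \<omega>)), G (fst (snd (snd \<omega>)), snd (snd (snd \<omega>))))) (joint_dist M1 M2 c)"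
proof -
  have s1: "set_pmf (pmf_of_set {..<M1}) = {..<M1}" "set_pmf (pmf_of_set {..<M2}) = {..<M2}"
    using assms by (auto intro!: set_pmf_of_set)
  show ?thesis
    unfolding joint_dist_def map_bind_pmf map_return_pmf assms(1,2)
    apply (rule bind_pmf_cong[OF refl])
    apply (rule bind_pmf_cong[OF refl])
    apply (unfold s1)
    subgoal for x xa using shift2[of x M1 xa M2 "\<lambda>tt. ((x, xa), G tt)"] by simp
    done
qed

lemma mk_sig_T:
  "e = 4 \<or> e = 5 \<Longrightarrow> edge_sig (mk_code q M1 M2 L1 L2 L3 L4 L5 L6) e \<omega> =
     edge_sig (mk_code q M1 M2 L1 L2 L3 L4 L5 L6) e (0, 0, fst (snd (snd \<omega>)), snd (snd (snd \<omega>)))"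
  by (cases \<omega>) (auto simp: edge_sig_def mk_code_def Let_def)

lemma mk_sig_rho:
  "\<not> (e = 4 \<or> e = 5) \<Longrightarrow> edge_sig (mk_code q M1 M2 L1 L2 L3 L4 L5 L6) e \<omega> =
     edge_sig (mk_code q M1 M2 L1 L2 L3 L4 L5 L6) e
       ((fst \<omega> + fst (snd (snd \<omega>))) mod M1, (fst (snd \<omega>) + snd (snd (snd \<omega>))) mod M2, 0, 0)"
  by (cases \<omega>) (auto simp: edge_sig_def mk_code_def Let_def)

lemma mk_leak:
  assumes "0 < M1" "0 < M2"
  shows "leakage M1 M2 (mk_code q M1 M2 L1 L2 L3 L4 L5 L6) e = 0"
proof -
  define c where "c = mk_code q M1 M2 L1 L2 L3 L4 L5 L6"
  have r: "rnd1 c = pmf_of_set {..<M1}" "rnd2 c = pmf_of_set {..<M2}" by (simp_all add: c_def mk_code_def)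
  have eq: "map_pmf (\<lambda>\<omega>. case \<omega> of (w1, w2, t1, t2) \<Rightarrow> ((w1, w2), edge_sig c e \<omega>)) (joint_dist M1 M2 c)
     = pair_pmf (pair_pmf (pmf_of_set {..<M1}) (pmf_of_set {..<M2})) (map_pmf (\<lambda>(t1, t2). edge_sig c e (if e = 4 \<or> e = 5 then (0, 0, t1, t2) else (t1, t2, 0, 0))) (pair_pmf (rnd1 c) (rnd2 c)))"
  proof (cases "e = 4 \<or> e = 5")
    case True
    have "map_pmf (\<lambda>\<omega>. case \<omega> of (w1, w2, t1, t2) \<Rightarrow> ((w1, w2), edge_sig c e \<omega>)) (joint_dist M1 M2 c)
      = map_pmf (\<lambda>\<omega>. ((fst \<omega>, fst (snd \<omega>)), (\<lambda>(t1, t2). edge_sig c e (if e = 4 \<or> e = 5 then (0, 0, t1, t2) else (t1, t2, 0, 0))) (fst (snd (snd \<omega>)), snd (snd (snd \<omega>))))) (joint_dist M1 M2 c)"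
      by (rule map_pmf_cong[OF refl]) (use True mk_sig_T[OF True] in \<open>auto simp: c_def\<close>)
    also have "\<dots> = pair_pmf (pair_pmf (pmf_of_set {..<M1}) (pmf_of_set {..<M2})) (map_pmf (\<lambda>(t1, t2). edge_sig c e (if e = 4 \<or> e = 5 then (0, 0, t1, t2) else (t1, t2, 0, 0))) (pair_pmf (rnd1 c) (rnd2 c)))"
      by (rule jd_T)
    finally show ?thesis .
  next
    case False
    have "map_pmf (\<lambda>\<omega>. case \<omega> of (w1, w2, t1, t2) \<Rightarrow> ((w1, w2), edge_sig c e \<omega>)) (joint_dist M1 M2 c)
      = map_pmf (\<lambda>\<omega>. ((fst \<omega>, fst (snd \<omega>)), (\<lambda>(t1, t2). edge_sig c e (if e = 4 \<or> e = 5 then (0, 0, t1, t2) else (t1, t2, 0, 0))) ((fst \<omega> + fst (snd (snd \<omega>))) mod M1, (fst (snd \<omega>) + snd (snd (snd \<omega>))) mod M2))) (joint_dist M1 M2 c)"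
      by (rule map_pmf_cong[OF refl]) (use False mk_sig_rho[OF False] in \<open>auto simp: c_def\<close>)
    also have "\<dots> = map_pmf (\<lambda>\<omega>. ((fst \<omega>, fst (snd \<omega>)), (\<lambda>(t1, t2). edge_sig c e (if e = 4 \<or> e = 5 then (0, 0, t1, t2) else (t1, t2, 0, 0))) (fst (snd (snd \<omega>)), snd (snd (snd \<omega>))))) (joint_dist M1 M2 c)"
      by (rule jd_rho[OF r assms])
    also have "\<dots> = pair_pmf (pair_pmf (pmf_of_set {..<M1}) (pmf_of_set {..<M2})) (map_pmf (\<lambda>(t1, t2). edge_sig c e (if e = 4 \<or> e = 5 then (0, 0, t1, t2) else (t1, t2, 0, 0))) (pair_pmf (rnd1 c) (rnd2 c)))"
      by (rule jd_T)
    finally show ?thesis .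
  qed
  show ?thesis unfolding leakage_def c_def[symmetric] eq by (rule MI_pair)
qed

lemma sum_lt_prod:
  fixes a b M1 M2 :: nat
  assumes "a < M1" "b < M2" shows "a + M1 * b < M1 * M2"
proof -
  have "M1 * (b + 1) \<le> M1 * M2" by (rule mult_le_mono2) (use assms in simp)
  thus ?thesis using assms by (simp add: algebra_simps)
qed

lemma mk_err:
  assumes q: "0 < q" and pos: "0 < M1" "0 < M2"
    and fit: "M1 \<le> q ^ L1" "M1 \<le> q ^ L4" "M2 \<le> q ^ L2" "M2 \<le> q ^ L5" "M1 * M2 \<le> q ^ L3" "M1 * M2 \<le> q ^ L6"
  shows "error_prob M1 M2 (mk_code q M1 M2 L1 L2 L3 L4 L5 L6) = 0"
proof -
  define c where "c = mk_code q M1 M2 L1 L2 L3 L4 L5 L6"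
  let ?P = "joint_dist M1 M2 c"
  have s1: "set_pmf (pmf_of_set {..<M1}) = {..<M1}" "set_pmf (pmf_of_set {..<M2}) = {..<M2}"
    using pos by (auto intro!: set_pmf_of_set)
  have supp: "w1 < M1 \<and> w2 < M2 \<and> t1 < M1 \<and> t2 < M2" if "(w1, w2, t1, t2) \<in> set_pmf ?P" for w1 w2 t1 t2
    using that s1 unfolding joint_pair by (auto simp: c_def mk_code_def)
  have good: "(dec1 c (edge_sig c 4 \<omega>) (edge_sig c 5 \<omega>) (edge_sig c 6 \<omega>),
         dec2 c (edge_sig c 4 \<omega>) (edge_sig c 5 \<omega>) (edge_sig c 6 \<omega>)) = (fst \<omega>, fst (snd \<omega>))"
    if "\<omega> \<in> set_pmf ?P" for \<omega>
  proof -
    obtain w1 w2 t1 t2 where om: "\<omega> = (w1, w2, t1, t2)" by (cases \<omega>) auto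
    have b: "w1 < M1" "w2 < M2" "t1 < M1" "t2 < M2" using supp that om by auto
    define a where "a = (w1 + t1) mod M1"
    define bb where "bb = (w2 + t2) mod M2"
    have a: "a < M1" "bb < M2" using pos by (simp_all add: a_def bb_def)
    have u1: "undigits q (digits q L1 a) = a" by (rule undigits_digits[OF q]) (use a fit in linarith)
    have u2: "undigits q (digits q L2 bb) = bb" by (rule undigits_digits[OF q]) (use a fit in linarith)
    have u4: "undigits q (digits q L4 t1) = t1" by (rule undigits_digits[OF q]) (use b fit in linarith)
    have u5: "undigits q (digits q L5 t2) = t2" by (rule undigits_digits[OF q]) (use b fit in linarith)
    have v: "a + M1 * bb < M1 * M2" by (rule sum_lt_prod[OF a])
    have u3: "undigits q (digits q L3 (a + M1 * bb)) = a + M1 * bb" by (rule undigits_digits[OF q]) (use v fit in linarith)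
    have u6: "undigits q (digits q L6 (a + M1 * bb)) = a + M1 * bb" by (rule undigits_digits[OF q]) (use v fit in linarith)
    have m1: "(a + M1 * bb) mod M1 = a" using a by simp
    have m2: "(a + M1 * bb) div M1 = bb" using a pos by simp
    have d1: "dec1 c (edge_sig c 4 \<omega>) (edge_sig c 5 \<omega>) (edge_sig c 6 \<omega>) = (a + M1 - t1) mod M1"
      unfolding om by (simp add: c_def mk_code_def edge_sig_def Let_def a_def[symmetric] bb_def[symmetric] u1 u2 u3 u4 u6 m1 a)
    have d2: "dec2 c (edge_sig c 4 \<omega>) (edge_sig c 5 \<omega>) (edge_sig c 6 \<omega>) = (bb + M2 - t2) mod M2"
      unfolding om by (simp add: c_def mk_code_def edge_sig_def Let_def a_def[symmetric] bb_def[symmetric] u1 u2 u3 u5 u6 m2 a)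
    have e1: "(a + M1 - t1) mod M1 = w1" unfolding a_def by (rule mod_unshift[OF b(1) b(3)])
    have e2: "(bb + M2 - t2) mod M2 = w2" unfolding bb_def by (rule mod_unshift[OF b(2) b(4)])
    show ?thesis by (simp only: d1 d2 e1 e2) (simp add: om)
  qed
  have "error_prob M1 M2 c = measure ?P ({\<omega>. case \<omega> of (w1, w2, t1, t2) \<Rightarrow>
        (dec1 c (edge_sig c 4 \<omega>) (edge_sig c 5 \<omega>) (edge_sig c 6 \<omega>),
         dec2 c (edge_sig c 4 \<omega>) (edge_sig c 5 \<omega>) (edge_sig c 6 \<omega>)) \<noteq> (w1, w2)} \<inter> set_pmf ?P)"
    unfolding error_prob_def by (rule measure_Int_set_pmf[symmetric])
  also have "{\<omega>. case \<omega> of (w1, w2, t1, t2) \<Rightarrow>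
        (dec1 c (edge_sig c 4 \<omega>) (edge_sig c 5 \<omega>) (edge_sig c 6 \<omega>),
         dec2 c (edge_sig c 4 \<omega>) (edge_sig c 5 \<omega>) (edge_sig c 6 \<omega>)) \<noteq> (w1, w2)} \<inter> set_pmf ?P = {}"
    using good by fastforce
  finally show ?thesis unfolding c_def by simp
qed

lemma msg_bound:
  assumes "1 < q" "0 \<le> R"
  shows "real (msg_size q n R) \<le> real q powr (real n * R + 1)"
proof -
  have g1: "1 \<le> real q powr (real n * R)" using assms by (simp add: ge_one_powr_ge_zero)
  have "real (msg_size q n R) \<le> real q powr (real n * R) + 1"
    unfolding msg_size_def by (simp add: of_nat_ceiling)
  also have "\<dots> \<le> real q powr (real n * R) * real q"
  proof -
    have "real q powr (real n * R) * 2 \<le> real q powr (real n * R) * real q"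
      by (rule mult_left_mono) (use assms in auto)
    thus ?thesis using g1 by simp
  qed
  also have "\<dots> = real q powr (real n * R + 1)" using assms by (simp add: powr_add)
  finally show ?thesis .
qed

lemma pow_bound:
  assumes "1 < q" "0 \<le> C" "y \<le> real n * C - 1"
  shows "real q powr y \<le> real (q ^ edge_len n C)"
proof -
  have L: "real n * C - 1 \<le> real (edge_len n C)"
    unfolding edge_len_def using assms(2) by simp
  have "real q powr y \<le> real q powr real (edge_len n C)"
    by (rule powr_mono) (use assms L in auto)
  also have "\<dots> = real (q ^ edge_len n C)" using assms by (simp add: powr_realpow)
  finally show ?thesis .
qed

lemma ev_lin: "0 < d \<Longrightarrow> eventually (\<lambda>n. a \<le> real n * d) sequentially"
proof -
  assume d: "0 < d"
  obtain N :: nat where N: "a / d < real N" using reals_Archimedean2 by blast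
  show ?thesis unfolding eventually_sequentially
  proof (intro exI allI impI)
    fix n assume "N \<le> n"
    hence "a / d \<le> real n" using N by linarith
    thus "a \<le> real n * d" using d by (simp add: field_simps)
  qed
qed

lemma fit1:
  assumes q: "1 < q" and R: "0 \<le> R" and C: "0 \<le> C" and h: "R = 0 \<or> R < C"
  shows "eventually (\<lambda>n. msg_size q n R \<le> q ^ edge_len n C) sequentially"
proof (cases "R = 0")
  case True
  thus ?thesis using q by (simp add: msg_size_def)
next
  case False
  hence RC: "R < C" using h by simp
  have "eventually (\<lambda>n. 2 \<le> real n * (C - R)) sequentially" by (rule ev_lin) (use RC in simp)
  thus ?thesis
  proof (rule eventually_mono)
    fix n assume n: "2 \<le> real n * (C - R)"
    have "real (msg_size q n R) \<le> real q powr (real n * R + 1)" by (rule msg_bound[OF q R])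
    also have "\<dots> \<le> real (q ^ edge_len n C)" by (rule pow_bound[OF q C]) (use n in \<open>simp add: algebra_simps\<close>)
    finally show "msg_size q n R \<le> q ^ edge_len n C" by (simp only: of_nat_le_iff)
  qed
qed

lemma fit2:
  assumes q: "1 < q" and R: "0 \<le> R1" "0 \<le> R2" and C: "0 \<le> C" and h: "R1 + R2 = 0 \<or> R1 + R2 < C"
  shows "eventually (\<lambda>n. msg_size q n R1 * msg_size q n R2 \<le> q ^ edge_len n C) sequentially"
proof (cases "R1 + R2 = 0")
  case True
  hence "R1 = 0" "R2 = 0" using R by auto
  thus ?thesis using q by (simp add: msg_size_def)
next
  case False
  hence RC: "R1 + R2 < C" using h by simp
  have "eventually (\<lambda>n. 3 \<le> real n * (C - (R1 + R2))) sequentially" by (rule ev_lin) (use RC in simp)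
  thus ?thesis
  proof (rule eventually_mono)
    fix n assume n: "3 \<le> real n * (C - (R1 + R2))"
    have "real (msg_size q n R1 * msg_size q n R2) \<le> real q powr (real n * R1 + 1) * real q powr (real n * R2 + 1)"
      unfolding of_nat_mult by (intro mult_mono msg_bound q R) auto
    also have "\<dots> = real q powr (real n * (R1 + R2) + 2)" using q by (simp add: powr_add[symmetric] algebra_simps)
    also have "\<dots> \<le> real (q ^ edge_len n C)" by (rule pow_bound[OF q C]) (use n in \<open>simp add: algebra_simps\<close>)
    finally show "msg_size q n R1 * msg_size q n R2 \<le> q ^ edge_len n C" by (simp only: of_nat_le_iff)
  qed
qed

lemma achievable:
  assumes q: "1 < q" and C: "0 \<le> C1" "0 \<le> C2" "0 \<le> C3" "0 \<le> C4" "0 \<le> C5" "0 \<le> C6"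
    and R: "0 \<le> R1" "0 \<le> R2"
    and h1: "R1 = 0 \<or> (R1 < C1 \<and> R1 < C4)" and h2: "R2 = 0 \<or> (R2 < C2 \<and> R2 < C5)"
    and h3: "R1 + R2 = 0 \<or> (R1 + R2 < C3 \<and> R1 + R2 < C6)"
  shows "sec_achievable q C1 C2 C3 C4 C5 C6 R1 R2"
proof -
  define cs where "cs = (\<lambda>n. mk_code q (msg_size q n R1) (msg_size q n R2)
     (edge_len n C1) (edge_len n C2) (edge_len n C3) (edge_len n C4) (edge_len n C5) (edge_len n C6))"
  have q0: "0 < q" using q by simp
  have p1: "0 < msg_size q n R1" and p2: "0 < msg_size q n R2" for n using q0 by (simp_all add: msg_size_def)
  have ev: "eventually (\<lambda>n. error_prob (msg_size q n R1) (msg_size q n R2) (cs n) = 0) sequentially"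
  proof -
    have "eventually (\<lambda>n. msg_size q n R1 \<le> q ^ edge_len n C1) sequentially" by (rule fit1[OF q R(1) C(1)]) (use h1 in auto)
    moreover have "eventually (\<lambda>n. msg_size q n R1 \<le> q ^ edge_len n C4) sequentially" by (rule fit1[OF q R(1) C(4)]) (use h1 in auto)
    moreover have "eventually (\<lambda>n. msg_size q n R2 \<le> q ^ edge_len n C2) sequentially" by (rule fit1[OF q R(2) C(2)]) (use h2 in auto)
    moreover have "eventually (\<lambda>n. msg_size q n R2 \<le> q ^ edge_len n C5) sequentially" by (rule fit1[OF q R(2) C(5)]) (use h2 in auto)
    moreover have "eventually (\<lambda>n. msg_size q n R1 * msg_size q n R2 \<le> q ^ edge_len n C3) sequentially" by (rule fit2[OF q R C(3)]) (use h3 in auto)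
    moreover have "eventually (\<lambda>n. msg_size q n R1 * msg_size q n R2 \<le> q ^ edge_len n C6) sequentially" by (rule fit2[OF q R C(6)]) (use h3 in auto)
    ultimately show ?thesis
    proof eventually_elim
      case (elim n)
      thus ?case unfolding cs_def by (intro mk_err[OF q0 p1 p2]) auto
    qed
  qed
  show ?thesis unfolding sec_achievable_def
  proof (intro conjI exI[of _ cs] allI ballI R)
    fix n show "code_valid q (msg_size q n R1) (msg_size q n R2) (edge_len n C1) (edge_len n C2) (edge_len n C3)
        (edge_len n C4) (edge_len n C5) (edge_len n C6) (cs n)"
      unfolding cs_def by (rule mk_valid[OF q0])
  next
    show "(\<lambda>n. error_prob (msg_size q n R1) (msg_size q n R2) (cs n)) \<longlonglongrightarrow> 0"
      by (rule tendsto_eventually[OF ev])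
  next
    fix e :: nat assume "e \<in> {1..6}"
    have "(\<lambda>n. leakage (msg_size q n R1) (msg_size q n R2) (cs n) e) = (\<lambda>n. 0)"
      unfolding cs_def by (rule ext, rule mk_leak[OF p1 p2])
    thus "(\<lambda>n. leakage (msg_size q n R1) (msg_size q n R2) (cs n) e) \<longlonglongrightarrow> 0" by simp
  qed
qed

theorem theorem6:
  fixes q :: nat and C1 C2 C3 C4 C5 C6 C7 :: real
  assumes "\<exists>p k. prime p \<and> 0 < k \<and> q = p ^ k"
    and "0 \<le> C1" "0 \<le> C2" "0 \<le> C3" "0 \<le> C4" "0 \<le> C5" "0 \<le> C6" "0 \<le> C7"
  shows "closure {(R1, R2). sec_achievable q C1 C2 C3 C4 C5 (C6 + C7) R1 R2} =
         {(R1, R2). 0 \<le> R1 \<and> 0 \<le> R2 \<and> R1 \<le> min C1 C4 \<and> R2 \<le> min C2 C5 \<and>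
                    R1 + R2 \<le> min C3 (C6 + C7)}"
proof -
  obtain p k where pk: "prime p" "0 < k" "q = p ^ k" using assms(1) by blast
  have p1: "1 < p" using pk(1) by (rule prime_gt_1_nat)
  have q: "1 < q" unfolding pk(3) using one_less_power[OF p1 pk(2)] .
  have C67: "0 \<le> C6 + C7" using assms by simp
  note C = assms(2-6) C67
  define A where "A = {(R1, R2). sec_achievable q C1 C2 C3 C4 C5 (C6 + C7) R1 R2}"
  define B where "B = {(R1, R2). 0 \<le> R1 \<and> 0 \<le> R2 \<and> R1 \<le> min C1 C4 \<and> R2 \<le> min C2 C5 \<and>
                    R1 + R2 \<le> min C3 (C6 + C7)}"
  have AB: "A \<subseteq> B"
  proof
    fix x assume "x \<in> A"
    then obtain R1 R2 where x: "x = (R1, R2)" and a: "sec_achievable q C1 C2 C3 C4 C5 (C6 + C7) R1 R2"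
      unfolding A_def by auto
    have "0 \<le> R1" "0 \<le> R2" using a unfolding sec_achievable_def by auto
    thus "x \<in> B" using converse[OF q C a] unfolding x B_def by auto
  qed
  have Bc: "closed B"
  proof -
    have "B = {x. 0 \<le> fst x} \<inter> {x. 0 \<le> snd x} \<inter> {x. fst x \<le> min C1 C4} \<inter> {x. snd x \<le> min C2 C5}
              \<inter> {x. fst x + snd x \<le> min C3 (C6 + C7)}"
      unfolding B_def by auto
    also have "closed \<dots>"
      by (intro closed_Int closed_Collect_le continuous_intros)
    finally show ?thesis .
  qed
  have "closure A \<subseteq> B" using closure_minimal[OF AB Bc] .
  moreover have "B \<subseteq> closure A"
  proof
    fix x assume "x \<in> B"
    then obtain R1 R2 where x: "x = (R1, R2)" and b: "0 \<le> R1" "0 \<le> R2" "R1 \<le> min C1 C4" "R2 \<le> min C2 C5"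
      "R1 + R2 \<le> min C3 (C6 + C7)" unfolding B_def by auto
    define t where "t = (\<lambda>n::nat. 1 - 1 / (real n + 2))"
    have t: "0 < t n" "t n < 1" for n unfolding t_def by (auto simp: field_simps)
    have tl: "t \<longlonglongrightarrow> 1"
    proof -
      have "(\<lambda>n. 1 / (real n + 2)) \<longlonglongrightarrow> 0"
        using LIMSEQ_ignore_initial_segment[OF lim_inverse_n', of 2] by (simp add: add.commute)
      from tendsto_diff[OF tendsto_const this, of 1] show ?thesis unfolding t_def by simp
    qed
    have sA: "(t n * R1, t n * R2) \<in> A" for n
    proof -
      have le: "t n * R \<le> R" "t n * R = 0 \<or> t n * R < R" if "0 \<le> R" for R
        using t[of n] that by (auto simp: mult_less_cancel_right2 mult_le_cancel_right2)
      have "sec_achievable q C1 C2 C3 C4 C5 (C6 + C7) (t n * R1) (t n * R2)"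
      proof (rule achievable[OF q C])
        show "0 \<le> t n * R1" "0 \<le> t n * R2" using t[of n] b by auto
        show "t n * R1 = 0 \<or> (t n * R1 < C1 \<and> t n * R1 < C4)"
          using le[OF b(1)] b(3) by auto
        show "t n * R2 = 0 \<or> (t n * R2 < C2 \<and> t n * R2 < C5)"
          using le[OF b(2)] b(4) by auto
        have e: "t n * R1 + t n * R2 = t n * (R1 + R2)" by (simp add: algebra_simps)
        show "t n * R1 + t n * R2 = 0 \<or> (t n * R1 + t n * R2 < C3 \<and> t n * R1 + t n * R2 < C6 + C7)"
          unfolding e using le(2)[OF add_nonneg_nonneg[OF b(1) b(2)]] b(5) by auto
      qed
      thus ?thesis unfolding A_def by simp
    qed
    have "(\<lambda>n. (t n * R1, t n * R2)) \<longlonglongrightarrow> (1 * R1, 1 * R2)"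
      by (intro tendsto_intros tl)
    hence "(\<lambda>n. (t n * R1, t n * R2)) \<longlonglongrightarrow> x" unfolding x by simp
    thus "x \<in> closure A" unfolding closure_sequential using sA by (intro exI[of _ "\<lambda>n. (t n * R1, t n * R2)"]) auto
  qed
  ultimately show ?thesis unfolding A_def B_def by blast
qed

end
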